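(* Let $a_1,\dots,a_n$ and $b_1,\dots,b_n$ be mutually commuting families of bosonic operators ($[a_i,a_j^\dagger]=[b_i,b_j^\dagger]=\delta_{ij}$, all other commutators among $a_i,a_i^\dagger,b_j,b_j^\dagger$ zero), and let $H=\sum_{i,j=1}^n\left(\alpha_{ij}a_i^\dagger a_j+\varepsilon_{ij}b_i^\dagger b_j+\gamma_{ij}a_i^\dagger b_j^\dagger+\gamma_{ji}^*a_ib_j\right)$ with $\alpha,\varepsilon$ complex Hermitian and $\gamma$ complex with $\gamma^T=\gamma$. Let $\psi=(a_1,\dots,a_n,b_1^\dagger,\dots,b_n^\dagger)^T$ and let $D$ be the $2n\times2n$ dynamic matrix determined by $[\psi_\mu,H]=\sum_\nu D_{\mu\nu}\psi_\nu$. Then $H$ is BV diagonalizable if and only if $D$ is physically diagonalizable.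
   Context: Here $H$ is called BV diagonalizable if there exist $2n$ operators $e_1,\dots,e_{2n}$, each a complex linear combination of $a_i,a_i^\dagger,b_i,b_i^\dagger$, satisfying the standard bosonic relations $[e_k,e_l^\dagger]=\delta_{kl}$, $[e_k,e_l]=0$, and real numbers $\lambda_1,\dots,\lambda_{2n},C$ with $H=\sum_k\lambda_ke_k^\dagger e_k+C$. A matrix is physically diagonalizable if it is diagonalizable over $\mathbb{C}$ and all its eigenvalues are real. *)

theory Defs
  imports Complex_Main "Jordan_Normal_Form.Matrix"
begin

text \<open>An abstract (unital, associative) complex *-algebra: a ring 'A together with a
  central unital ring embedding emb of the complex numbers (scalars act by
  left multiplication with emb c) and an involution st (the dagger).\<close>
definition complex_star_algebra :: "(complex \<Rightarrow> 'A::ring_1) \<Rightarrow> ('A \<Rightarrow> 'A) \<Rightarrow> bool" where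
  "complex_star_algebra emb st \<longleftrightarrow>
     emb 1 = 1 \<and>
     (\<forall>c d. emb (c + d) = emb c + emb d) \<and>
     (\<forall>c d. emb (c * d) = emb c * emb d) \<and>
     (\<forall>c x. emb c * x = x * emb c) \<and>
     (\<forall>x y. st (x + y) = st x + st y) \<and>
     (\<forall>x y. st (x * y) = st y * st x) \<and>
     (\<forall>x. st (st x) = x) \<and>
     (\<forall>c. st (emb c) = emb (cnj c))"

definition comm :: "'A::ring \<Rightarrow> 'A \<Rightarrow> 'A" where
  "comm x y = x * y - y * x"

definition kdelta :: "nat \<Rightarrow> nat \<Rightarrow> 'A::ring_1" where
  "kdelta i j = (if i = j then 1 else 0)"

definition bosonic_families ::
  "(complex \<Rightarrow> 'A::ring_1) \<Rightarrow> ('A \<Rightarrow> 'A) \<Rightarrow> nat \<Rightarrow> (nat \<Rightarrow> 'A) \<Rightarrow> (nat \<Rightarrow> 'A) \<Rightarrow> bool" where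
  "bosonic_families emb st n a b \<longleftrightarrow>
     (\<forall>i<n. \<forall>j<n.
        comm (a i) (st (a j)) = kdelta i j \<and>
        comm (b i) (st (b j)) = kdelta i j \<and>
        comm (a i) (a j) = 0 \<and>
        comm (b i) (b j) = 0 \<and>
        comm (a i) (b j) = 0 \<and>
        comm (a i) (st (b j)) = 0)"

definition hamiltonian ::
  "(complex \<Rightarrow> 'A::ring_1) \<Rightarrow> ('A \<Rightarrow> 'A) \<Rightarrow> nat \<Rightarrow> (nat \<Rightarrow> 'A) \<Rightarrow> (nat \<Rightarrow> 'A)
   \<Rightarrow> (nat \<Rightarrow> nat \<Rightarrow> complex) \<Rightarrow> (nat \<Rightarrow> nat \<Rightarrow> complex) \<Rightarrow> (nat \<Rightarrow> nat \<Rightarrow> complex) \<Rightarrow> 'A" where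
  "hamiltonian emb st n a b \<alpha> \<epsilon> \<gamma> =
     (\<Sum>i<n. \<Sum>j<n.
        emb (\<alpha> i j) * st (a i) * a j + emb (\<epsilon> i j) * st (b i) * b j
      + emb (\<gamma> i j) * st (a i) * st (b j) + emb (cnj (\<gamma> j i)) * a i * b j)"

definition psi :: "('A \<Rightarrow> 'A) \<Rightarrow> nat \<Rightarrow> (nat \<Rightarrow> 'A) \<Rightarrow> (nat \<Rightarrow> 'A) \<Rightarrow> nat \<Rightarrow> 'A" where
  "psi st n a b \<mu> = (if \<mu> < n then a \<mu> else st (b (\<mu> - n)))"

definition is_dynamic_matrix ::
  "(complex \<Rightarrow> 'A::ring_1) \<Rightarrow> ('A \<Rightarrow> 'A) \<Rightarrow> nat \<Rightarrow> (nat \<Rightarrow> 'A) \<Rightarrow> (nat \<Rightarrow> 'A) \<Rightarrow> 'A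
   \<Rightarrow> complex mat \<Rightarrow> bool" where
  "is_dynamic_matrix emb st n a b H D \<longleftrightarrow>
     D \<in> carrier_mat (2*n) (2*n) \<and>
     (\<forall>\<mu><2*n. comm (psi st n a b \<mu>) H = (\<Sum>\<nu><2*n. emb (D $$ (\<mu>,\<nu>)) * psi st n a b \<nu>))"

definition in_mode_span ::
  "(complex \<Rightarrow> 'A::ring_1) \<Rightarrow> ('A \<Rightarrow> 'A) \<Rightarrow> nat \<Rightarrow> (nat \<Rightarrow> 'A) \<Rightarrow> (nat \<Rightarrow> 'A) \<Rightarrow> 'A \<Rightarrow> bool" where
  "in_mode_span emb st n a b e \<longleftrightarrow>
     (\<exists>c1 c2 c3 c4 :: nat \<Rightarrow> complex.
        e = (\<Sum>i<n. emb (c1 i) * a i + emb (c2 i) * st (a i)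
                  + emb (c3 i) * b i + emb (c4 i) * st (b i)))"

definition BV_diagonalizable ::
  "(complex \<Rightarrow> 'A::ring_1) \<Rightarrow> ('A \<Rightarrow> 'A) \<Rightarrow> nat \<Rightarrow> (nat \<Rightarrow> 'A) \<Rightarrow> (nat \<Rightarrow> 'A) \<Rightarrow> 'A \<Rightarrow> bool" where
  "BV_diagonalizable emb st n a b H \<longleftrightarrow>
     (\<exists>(e :: nat \<Rightarrow> 'A) (lam :: nat \<Rightarrow> real) (C :: real).
        (\<forall>k<2*n. in_mode_span emb st n a b (e k)) \<and>
        (\<forall>k<2*n. \<forall>l<2*n. comm (e k) (st (e l)) = kdelta k l \<and> comm (e k) (e l) = 0) \<and>
        H = (\<Sum>k<2*n. emb (complex_of_real (lam k)) * st (e k) * e k) + emb (complex_of_real C))"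

definition physically_diagonalizable :: "complex mat \<Rightarrow> bool" where
  "physically_diagonalizable M \<longleftrightarrow>
     (\<exists>m. M \<in> carrier_mat m m \<and>
        (\<exists>\<Lambda> P Q. similar_mat_wit M \<Lambda> P Q \<and> diagonal_mat \<Lambda> \<and>
           (\<forall>i<m. \<Lambda> $$ (i,i) \<in> \<real>)))"

end

theory Submission
  imports Defs "Jordan_Normal_Form.Determinant"
begin

locale csa =
  fixes emb :: "complex \<Rightarrow> 'A::ring_1" and st :: "'A \<Rightarrow> 'A"
  assumes alg: "complex_star_algebra emb st"
    and nontriv: "(1::'A) \<noteq> 0"
begin

lemma emb1[simp]: "emb 1 = 1" using alg unfolding complex_star_algebra_def by blast
lemma emb_add[simp]: "emb (c + d) = emb c + emb d" using alg unfolding complex_star_algebra_def by blast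
lemma emb_mult: "emb (c * d) = emb c * emb d" using alg unfolding complex_star_algebra_def by blast
lemma emb_comm: "emb c * x = x * emb c" using alg unfolding complex_star_algebra_def by blast
lemma st_add[simp]: "st (x + y) = st x + st y" using alg unfolding complex_star_algebra_def by blast
lemma st_mult[simp]: "st (x * y) = st y * st x" using alg unfolding complex_star_algebra_def by blast
lemma st_st[simp]: "st (st x) = x" using alg unfolding complex_star_algebra_def by blast
lemma st_emb[simp]: "st (emb c) = emb (cnj c)" using alg unfolding complex_star_algebra_def by blast

lemma emb0[simp]: "emb 0 = 0"
proof -
  have "emb (0+0) = emb 0 + emb 0" by (rule emb_add)
  thus ?thesis by simp
qed
lemma emb_minus[simp]: "emb (- c) = - emb c"
proof -
  have "emb (c + - c) = emb c + emb (-c)" by (rule emb_add)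
  thus ?thesis by (simp add: eq_neg_iff_add_eq_0 add.commute)
qed
lemma emb_diff[simp]: "emb (c - d) = emb c - emb d"
  using emb_add[of c "-d"] by simp
lemma emb_sum: "emb (\<Sum>i\<in>S. f i) = (\<Sum>i\<in>S. emb (f i))"
  by (induction S rule: infinite_finite_induct) auto
lemma emb_inj: assumes "emb c = 0" shows "c = 0"
proof (rule ccontr)
  assume "c \<noteq> 0"
  hence "emb (inverse c * c) = 1" by simp
  hence "emb (inverse c) * emb c = 1" by (simp add: emb_mult)
  with assms nontriv show False by simp
qed
lemma emb_eq_iff: "emb c = emb d \<longleftrightarrow> c = d"
  using emb_inj[of "c - d"] by auto

lemma st0[simp]: "st 0 = 0"
proof -
  have "st (0+0) = st 0 + st 0" by (rule st_add)
  thus ?thesis by simp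
qed
lemma st_minus[simp]: "st (- x) = - st x"
proof -
  have "st (x + - x) = st x + st (-x)" by (rule st_add)
  thus ?thesis by (simp add: eq_neg_iff_add_eq_0 add.commute)
qed
lemma st_diff[simp]: "st (x - y) = st x - st y"
  using st_add[of x "-y"] by simp
lemma st_sum: "st (\<Sum>i\<in>S. f i) = (\<Sum>i\<in>S. st (f i))"
  by (induction S rule: infinite_finite_induct) auto
lemma st1[simp]: "st 1 = 1" using st_emb[of 1] by simp
lemma st_emb_mult[simp]: "st (emb c * x) = emb (cnj c) * st x"
  by (simp only: st_mult st_emb emb_comm[of "cnj c"])

lemma emb_emb: "emb c * (emb d * x) = emb (c * d) * x"
  by (simp add: emb_mult mult.assoc)

lemma comm_add_left: "comm (x + y) z = comm x z + comm y z" by (simp add: comm_def algebra_simps)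
lemma comm_add_right: "comm z (x + y) = comm z x + comm z y" by (simp add: comm_def algebra_simps)
lemma comm_sum_left: "comm (\<Sum>i\<in>S. f i) z = (\<Sum>i\<in>S. comm (f i) z)"
  by (simp add: comm_def sum_distrib_left sum_distrib_right sum_subtractf)
lemma comm_sum_right: "comm z (\<Sum>i\<in>S. f i) = (\<Sum>i\<in>S. comm z (f i))"
  by (simp add: comm_def sum_distrib_left sum_distrib_right sum_subtractf)
lemma comm_emb_left: "comm (emb c * x) y = emb c * comm x y"
proof -
  have "y * (emb c * x) = emb c * (y * x)" by (metis emb_comm mult.assoc)
  thus ?thesis by (simp add: comm_def algebra_simps)
qed
lemma comm_emb_right: "comm x (emb c * y) = emb c * comm x y"
proof -
  have "x * (emb c * y) = emb c * (x * y)" by (metis emb_comm mult.assoc)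
  thus ?thesis by (simp add: comm_def algebra_simps)
qed
lemma comm_emb_const[simp]: "comm x (emb c) = 0"
  using emb_comm[of c x] by (simp add: comm_def)
lemma comm_mult_right: "comm x (y * z) = comm x y * z + y * comm x z"
  by (simp add: comm_def algebra_simps)
lemma comm_mult_left: "comm (x * y) z = x * comm y z + comm x z * y"
  by (simp add: comm_def algebra_simps)
lemma comm_antisym: "comm y x = - comm x y"
  by (simp add: comm_def)
lemma comm_st: "comm (st x) (st y) = st (comm y x)"
  by (simp add: comm_def)
lemma comm_zero_left[simp]: "comm 0 x = 0" by (simp add: comm_def)
lemma comm_diff_left: "comm (x - y) z = comm x z - comm y z" by (simp add: comm_def algebra_simps)

end

lemma sum_split2: fixes n :: nat shows "(\<Sum>\<mu><2*n. f \<mu>) = (\<Sum>i<n. f i) + (\<Sum>i<n. f (n+i))"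
proof -
  have "(\<Sum>\<mu><2*n. f \<mu>) = (\<Sum>\<mu>\<in>{..<n} \<union> (\<lambda>i. n+i) ` {..<n}. f \<mu>)"
  proof (rule sum.cong)
    show "{..<2 * n} = {..<n} \<union> (+) n ` {..<n}"
    proof
      show "{..<2 * n} \<subseteq> {..<n} \<union> (+) n ` {..<n}"
      proof
        fix x assume "x \<in> {..<2*n}"
        thus "x \<in> {..<n} \<union> (+) n ` {..<n}"
          by (cases "x < n") (auto intro!: image_eqI[of _ _ "x - n"])
      qed
    qed auto
  qed simp
  also have "\<dots> = (\<Sum>i<n. f i) + (\<Sum>\<mu>\<in>(\<lambda>i. n+i) ` {..<n}. f \<mu>)"
    by (rule sum.union_disjoint) auto
  also have "(\<Sum>\<mu>\<in>(\<lambda>i. n+i) ` {..<n}. f \<mu>) = (\<Sum>i<n. f (n+i))"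
    by (simp add: sum.reindex)
  finally show ?thesis .
qed

definition etac :: "nat \<Rightarrow> nat \<Rightarrow> complex" where
  "etac n \<mu> = (if \<mu> < n then 1 else -1)"

definition Mx :: "nat \<Rightarrow> (nat\<Rightarrow>nat\<Rightarrow>complex) \<Rightarrow> (nat\<Rightarrow>nat\<Rightarrow>complex) \<Rightarrow> (nat\<Rightarrow>nat\<Rightarrow>complex)
   \<Rightarrow> nat \<Rightarrow> nat \<Rightarrow> complex" where
  "Mx n \<alpha> \<epsilon> \<gamma> \<mu> \<nu> = (if \<mu> < n then (if \<nu> < n then \<alpha> \<mu> \<nu> else \<gamma> \<mu> (\<nu> - n))
      else (if \<nu> < n then cnj (\<gamma> (\<mu> - n) \<nu>) else \<epsilon> (\<nu> - n) (\<mu> - n)))"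

locale bosq = csa emb st for emb :: "complex \<Rightarrow> 'A::ring_1" and st +
  fixes n :: nat and a b :: "nat \<Rightarrow> 'A"
  assumes bos: "bosonic_families emb st n a b"
begin

abbreviation "\<psi> \<equiv> psi st n a b"

lemma kd: "(kdelta i j :: 'A) = emb (if i = j then 1 else 0)"
  by (simp add: kdelta_def)

lemma bosD:
  assumes "i < n" "j < n"
  shows "comm (a i) (st (a j)) = emb (if i = j then 1 else 0)"
    "comm (b i) (st (b j)) = emb (if i = j then 1 else 0)"
    "comm (a i) (a j) = 0" "comm (b i) (b j) = 0"
    "comm (a i) (b j) = 0" "comm (a i) (st (b j)) = 0"
  using bos assms unfolding bosonic_families_def kd by auto

lemma psi_lo[simp]: "\<mu> < n \<Longrightarrow> \<psi> \<mu> = a \<mu>" by (simp add: psi_def)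
lemma psi_hi[simp]: "\<psi> (n + i) = st (b i)" by (simp add: psi_def)

lemma psi_cases:
  assumes "\<mu> < 2*n"
  obtains (lo) "\<mu> < n" | (hi) i where "i < n" "\<mu> = n + i"
proof (cases "\<mu> < n")
  case True thus ?thesis using lo by blast
next
  case False thus ?thesis using hi[of "\<mu> - n"] assms by auto
qed

lemma comm_psi_psi:
  assumes "\<mu> < 2*n" "\<nu> < 2*n" shows "comm (\<psi> \<mu>) (\<psi> \<nu>) = 0"
proof -
  note B = bosD
  show ?thesis
  proof (cases rule: psi_cases[OF assms(1), case_names lo hi])
    case lo
    then show ?thesis
    proof (cases rule: psi_cases[OF assms(2), case_names lo hi])
      case lo2: lo with lo show ?thesis using B by simp
    next
      case (hi j) with lo show ?thesis using B by simp
    qed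
  next
    case (hi i)
    then show ?thesis
    proof (cases rule: psi_cases[OF assms(2), case_names lo hi])
      case lo2: lo with hi show ?thesis using B(6)[of \<nu> i] by (simp add: comm_antisym[of "st (b i)"])
    next
      case (hi j) with \<open>i<n\<close> \<open>\<mu> = n+i\<close> show ?thesis using B(4)[of j i] by (simp add: comm_st)
    qed
  qed
qed

lemma comm_psi_stpsi:
  assumes "\<mu> < 2*n" "\<nu> < 2*n"
  shows "comm (\<psi> \<mu>) (st (\<psi> \<nu>)) = emb (if \<mu> = \<nu> then etac n \<mu> else 0)"
proof -
  note B = bosD
  show ?thesis
  proof (cases rule: psi_cases[OF assms(1), case_names lo hi])
    case lo
    then show ?thesis
    proof (cases rule: psi_cases[OF assms(2), case_names lo hi])
      case lo2: lo with lo show ?thesis using B by (simp add: etac_def)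
    next
      case (hi j) with lo show ?thesis using B by simp
    qed
  next
    case (hi i)
    then show ?thesis
    proof (cases rule: psi_cases[OF assms(2), case_names lo hi])
      case lo2: lo with hi show ?thesis using B(5)[of \<nu> i] by (simp add: comm_st)
    next
      case (hi j) with \<open>i<n\<close> \<open>\<mu> = n+i\<close> show ?thesis using B(2)[of j i]
        by (auto simp add: comm_antisym[of "st (b i)"] etac_def)
    qed
  qed
qed

lemma comm_stpsi_stpsi:
  assumes "\<mu> < 2*n" "\<nu> < 2*n" shows "comm (st (\<psi> \<mu>)) (st (\<psi> \<nu>)) = 0"
  using comm_psi_psi[OF assms(2,1)] by (simp add: comm_st)

lemma comm_stpsi_psi:
  assumes "\<mu> < 2*n" "\<nu> < 2*n"
  shows "comm (st (\<psi> \<mu>)) (\<psi> \<nu>) = emb (if \<mu> = \<nu> then - etac n \<mu> else 0)"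
  using comm_psi_stpsi[OF assms(2,1)] by (auto simp add: comm_antisym[of "st (\<psi> \<mu>)"])

end

context bosq
begin

definition lc :: "(nat \<Rightarrow> complex) \<Rightarrow> (nat \<Rightarrow> complex) \<Rightarrow> 'A" where
  "lc x y = (\<Sum>\<mu><2*n. emb (x \<mu>) * \<psi> \<mu> + emb (y \<mu>) * st (\<psi> \<mu>))"

lemma sum_emb_delta: fixes N :: nat
  assumes "\<nu> < N"
  shows "(\<Sum>\<mu><N. emb (x \<mu>) * emb (if \<mu> = \<nu> then c else 0)) = emb (x \<nu> * c)"
proof -
  have "(\<Sum>\<mu><N. emb (x \<mu>) * emb (if \<mu> = \<nu> then c else 0)) = (\<Sum>\<mu><N. if \<mu> = \<nu> then emb (x \<nu> * c) else 0)"
    by (rule sum.cong) (auto simp: emb_mult)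
  also have "\<dots> = emb (x \<nu> * c)" using assms by (subst sum.delta) auto
  finally show ?thesis .
qed

lemma comm_lc_psi:
  assumes "\<nu> < 2*n"
  shows "comm (lc x y) (\<psi> \<nu>) = emb (- y \<nu> * etac n \<nu>)"
proof -
  have "comm (lc x y) (\<psi> \<nu>) = (\<Sum>\<mu><2*n. emb (x \<mu>) * comm (\<psi> \<mu>) (\<psi> \<nu>) + emb (y \<mu>) * comm (st (\<psi> \<mu>)) (\<psi> \<nu>))"
    unfolding lc_def comm_sum_left comm_add_left comm_emb_left ..
  also have "\<dots> = (\<Sum>\<mu><2*n. emb (y \<mu>) * emb (if \<mu> = \<nu> then - etac n \<nu> else 0))"
    by (rule sum.cong) (auto simp: comm_psi_psi comm_stpsi_psi assms)
  also have "\<dots> = emb (- y \<nu> * etac n \<nu>)" using sum_emb_delta[OF assms] by simp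
  finally show ?thesis .
qed

lemma comm_lc_stpsi:
  assumes "\<nu> < 2*n"
  shows "comm (lc x y) (st (\<psi> \<nu>)) = emb (x \<nu> * etac n \<nu>)"
proof -
  have "comm (lc x y) (st (\<psi> \<nu>)) = (\<Sum>\<mu><2*n. emb (x \<mu>) * comm (\<psi> \<mu>) (st (\<psi> \<nu>)) + emb (y \<mu>) * comm (st (\<psi> \<mu>)) (st (\<psi> \<nu>)))"
    unfolding lc_def comm_sum_left comm_add_left comm_emb_left ..
  also have "\<dots> = (\<Sum>\<mu><2*n. emb (x \<mu>) * emb (if \<mu> = \<nu> then etac n \<nu> else 0))"
    by (rule sum.cong) (auto simp: comm_psi_stpsi comm_stpsi_stpsi assms)
  also have "\<dots> = emb (x \<nu> * etac n \<nu>)" using sum_emb_delta[OF assms] by simp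
  finally show ?thesis .
qed

lemma etac_nz: "etac n \<nu> \<noteq> 0" by (simp add: etac_def)
lemma etac_sq: "etac n \<nu> * etac n \<nu> = 1" by (simp add: etac_def)
lemma etac_cnj[simp]: "cnj (etac n \<nu>) = etac n \<nu>" by (simp add: etac_def)

lemma lc_zero:
  assumes "lc x y = 0" "\<nu> < 2*n"
  shows "x \<nu> = 0" "y \<nu> = 0"
proof -
  have "emb (x \<nu> * etac n \<nu>) = 0" using comm_lc_stpsi[OF assms(2), of x y] assms(1) by simp
  thus "x \<nu> = 0" using emb_inj etac_nz[of \<nu>] by force
  have "emb (- y \<nu> * etac n \<nu>) = 0" using comm_lc_psi[OF assms(2), of x y] assms(1) by simp
  thus "y \<nu> = 0" using emb_inj etac_nz[of \<nu>] by force
qed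

lemma lc_diff: "lc x y - lc x' y' = lc (\<lambda>\<mu>. x \<mu> - x' \<mu>) (\<lambda>\<mu>. y \<mu> - y' \<mu>)"
  unfolding lc_def by (simp add: sum_subtractf[symmetric] algebra_simps)

lemma lc_eq:
  assumes "lc x y = lc x' y'" "\<nu> < 2*n"
  shows "x \<nu> = x' \<nu>" "y \<nu> = y' \<nu>"
proof -
  have "lc (\<lambda>\<mu>. x \<mu> - x' \<mu>) (\<lambda>\<mu>. y \<mu> - y' \<mu>) = 0" using assms(1) lc_diff[of x y x' y'] by simp
  from lc_zero[OF this assms(2)] show "x \<nu> = x' \<nu>" "y \<nu> = y' \<nu>" by auto
qed

lemma comm_lc_lc:
  "comm (lc x y) (lc x' y') = emb (\<Sum>\<nu><2*n. etac n \<nu> * (x \<nu> * y' \<nu> - y \<nu> * x' \<nu>))"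
proof -
  have "comm (lc x y) (lc x' y') = (\<Sum>\<nu><2*n. emb (x' \<nu>) * comm (lc x y) (\<psi> \<nu>) + emb (y' \<nu>) * comm (lc x y) (st (\<psi> \<nu>)))"
    unfolding lc_def[of x' y'] comm_sum_right comm_add_right comm_emb_right ..
  also have "\<dots> = (\<Sum>\<nu><2*n. emb (etac n \<nu> * (x \<nu> * y' \<nu> - y \<nu> * x' \<nu>)))"
    by (rule sum.cong) (auto simp: comm_lc_psi comm_lc_stpsi emb_mult[symmetric] algebra_simps)
  finally show ?thesis by (simp add: emb_sum)
qed

lemma st_lc: "st (lc x y) = lc (\<lambda>\<mu>. cnj (y \<mu>)) (\<lambda>\<mu>. cnj (x \<mu>))"
  unfolding lc_def st_sum st_add st_emb_mult st_st by (simp add: add.commute)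

lemma comm_lc_st_lc:
  "comm (lc x y) (st (lc x' y')) = emb (\<Sum>\<nu><2*n. etac n \<nu> * (x \<nu> * cnj (x' \<nu>) - y \<nu> * cnj (y' \<nu>)))"
  unfolding st_lc comm_lc_lc by simp

end

context bosq
begin

definition Hq :: "(nat \<Rightarrow> nat \<Rightarrow> complex) \<Rightarrow> complex \<Rightarrow> 'A" where
  "Hq M c = (\<Sum>\<rho><2*n. \<Sum>\<nu><2*n. emb (M \<rho> \<nu>) * st (\<psi> \<rho>) * \<psi> \<nu>) + emb c"

lemma comm_psi_Hq:
  assumes "\<mu> < 2*n"
  shows "comm (\<psi> \<mu>) (Hq M c) = (\<Sum>\<nu><2*n. emb (etac n \<mu> * M \<mu> \<nu>) * \<psi> \<nu>)"
proof -
  have "comm (\<psi> \<mu>) (Hq M c) = (\<Sum>\<rho><2*n. \<Sum>\<nu><2*n. comm (\<psi> \<mu>) (emb (M \<rho> \<nu>) * (st (\<psi> \<rho>) * \<psi> \<nu>)))"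
    unfolding Hq_def comm_add_right comm_emb_const comm_sum_right by (simp add: mult.assoc)
  also have "\<dots> = (\<Sum>\<rho><2*n. \<Sum>\<nu><2*n. emb (M \<rho> \<nu> * (if \<mu> = \<rho> then etac n \<mu> else 0)) * \<psi> \<nu>)"
    by (intro sum.cong refl) (simp add: comm_emb_right comm_mult_right comm_psi_stpsi comm_psi_psi assms emb_mult mult.assoc)
  also have "\<dots> = (\<Sum>\<nu><2*n. \<Sum>\<rho><2*n. emb (M \<rho> \<nu> * (if \<mu> = \<rho> then etac n \<mu> else 0)) * \<psi> \<nu>)"
    by (rule sum.swap)
  also have "\<dots> = (\<Sum>\<nu><2*n. emb (etac n \<mu> * M \<mu> \<nu>) * \<psi> \<nu>)"
  proof (rule sum.cong[OF refl])
    fix \<nu>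
    have "(\<Sum>\<rho><2*n. emb (M \<rho> \<nu> * (if \<mu> = \<rho> then etac n \<mu> else 0)) * \<psi> \<nu>)
        = (\<Sum>\<rho><2*n. emb (M \<rho> \<nu> * (if \<mu> = \<rho> then etac n \<mu> else 0))) * \<psi> \<nu>"
      by (simp add: sum_distrib_right)
    also have "(\<Sum>\<rho><2*n. emb (M \<rho> \<nu> * (if \<mu> = \<rho> then etac n \<mu> else 0))) = emb (etac n \<mu> * M \<mu> \<nu>)"
      unfolding emb_sum[symmetric] using assms by (simp add: if_distrib[of "\<lambda>x. _ * x"] cong: if_cong) (simp add: mult.commute)
    finally show "(\<Sum>\<rho><2*n. emb (M \<rho> \<nu> * (if \<mu> = \<rho> then etac n \<mu> else 0)) * \<psi> \<nu>) = emb (etac n \<mu> * M \<mu> \<nu>) * \<psi> \<nu>" .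
  qed
  finally show ?thesis .
qed

lemma comm_stpsi_Hq:
  assumes "\<mu> < 2*n"
  shows "comm (st (\<psi> \<mu>)) (Hq M c) = (\<Sum>\<rho><2*n. emb (- etac n \<mu> * M \<rho> \<mu>) * st (\<psi> \<rho>))"
proof -
  have "comm (st (\<psi> \<mu>)) (Hq M c) = (\<Sum>\<rho><2*n. \<Sum>\<nu><2*n. comm (st (\<psi> \<mu>)) (emb (M \<rho> \<nu>) * (st (\<psi> \<rho>) * \<psi> \<nu>)))"
    unfolding Hq_def comm_add_right comm_emb_const comm_sum_right by (simp add: mult.assoc)
  also have "\<dots> = (\<Sum>\<rho><2*n. \<Sum>\<nu><2*n. emb (M \<rho> \<nu> * (if \<mu> = \<nu> then - etac n \<mu> else 0)) * st (\<psi> \<rho>))"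
    by (intro sum.cong refl) (simp add: comm_emb_right comm_mult_right comm_stpsi_stpsi comm_stpsi_psi assms emb_mult mult.assoc emb_comm[of _ "st (\<psi> _)"])
  also have "\<dots> = (\<Sum>\<rho><2*n. emb (- etac n \<mu> * M \<rho> \<mu>) * st (\<psi> \<rho>))"
  proof (rule sum.cong[OF refl])
    fix \<rho>
    have "(\<Sum>\<nu><2*n. emb (M \<rho> \<nu> * (if \<mu> = \<nu> then - etac n \<mu> else 0)) * st (\<psi> \<rho>))
        = (\<Sum>\<nu><2*n. emb (M \<rho> \<nu> * (if \<mu> = \<nu> then - etac n \<mu> else 0))) * st (\<psi> \<rho>)"
      by (simp add: sum_distrib_right)
    also have "(\<Sum>\<nu><2*n. emb (M \<rho> \<nu> * (if \<mu> = \<nu> then - etac n \<mu> else 0))) = emb (- etac n \<mu> * M \<rho> \<mu>)"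
      unfolding emb_sum[symmetric] using assms by (simp add: if_distrib[of "\<lambda>x. _ * x"] cong: if_cong) (simp add: mult.commute)
    finally show "(\<Sum>\<nu><2*n. emb (M \<rho> \<nu> * (if \<mu> = \<nu> then - etac n \<mu> else 0)) * st (\<psi> \<rho>)) = emb (- etac n \<mu> * M \<rho> \<mu>) * st (\<psi> \<rho>)" .
  qed
  finally show ?thesis .
qed

end

context bosq
begin

lemma ham_form:
  "hamiltonian emb st n a b \<alpha> \<epsilon> \<gamma> = Hq (Mx n \<alpha> \<epsilon> \<gamma>) (- (\<Sum>i<n. \<epsilon> i i))"
proof -
  define F where "F \<rho> \<nu> = emb (Mx n \<alpha> \<epsilon> \<gamma> \<rho> \<nu>) * st (\<psi> \<rho>) * \<psi> \<nu>" for \<rho> \<nu>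
  define T1 where "T1 i j = emb (\<alpha> i j) * st (a i) * a j" for i j
  define T2 where "T2 i j = emb (\<epsilon> i j) * st (b i) * b j" for i j
  define T3 where "T3 i j = emb (\<gamma> i j) * st (a i) * st (b j)" for i j
  define T4 where "T4 i j = emb (cnj (\<gamma> j i)) * a i * b j" for i j
  have ham: "hamiltonian emb st n a b \<alpha> \<epsilon> \<gamma> = (\<Sum>i<n. \<Sum>j<n. T1 i j + T2 i j + T3 i j + T4 i j)"
    unfolding hamiltonian_def T1_def T2_def T3_def T4_def ..
  have e1: "F i j = T1 i j" if "i < n" "j < n" for i j
    using that by (simp add: F_def T1_def Mx_def)
  have e2: "F i (n+j) = T3 i j" if "i < n" "j < n" for i j
    using that by (simp add: F_def T3_def Mx_def)
  have e3: "F (n+i) j = T4 j i" if "i < n" "j < n" for i j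
  proof -
    have "comm (a j) (b i) = 0" using bosD(5)[OF that(2,1)] .
    hence ab: "b i * a j = a j * b i" by (simp add: comm_def)
    show ?thesis using that by (simp add: F_def T4_def Mx_def mult.assoc ab)
  qed
  have e4: "F (n+i) (n+j) = T2 j i + emb (if i = j then \<epsilon> i i else 0)" if "i < n" "j < n" for i j
  proof -
    have "comm (b i) (st (b j)) = emb (if i = j then 1 else 0)" using bosD(2)[OF that] .
    hence bb: "b i * st (b j) = st (b j) * b i + emb (if i = j then 1 else 0)" by (simp add: comm_def algebra_simps)
    show ?thesis using that
      by (simp add: F_def T2_def Mx_def mult.assoc bb distrib_left emb_mult[symmetric])
  qed
  have "Hq (Mx n \<alpha> \<epsilon> \<gamma>) (- (\<Sum>i<n. \<epsilon> i i)) = (\<Sum>\<rho><2*n. \<Sum>\<nu><2*n. F \<rho> \<nu>) - emb (\<Sum>i<n. \<epsilon> i i)"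
    unfolding Hq_def F_def by simp
  also have "(\<Sum>\<rho><2*n. \<Sum>\<nu><2*n. F \<rho> \<nu>) = (\<Sum>i<n. \<Sum>j<n. F i j + F i (n+j) + F (n+i) j + F (n+i) (n+j))"
    unfolding sum_split2 by (simp add: sum.distrib algebra_simps)
  also have "\<dots> = (\<Sum>i<n. \<Sum>j<n. T1 i j + T3 i j + T4 j i + T2 j i + emb (if i = j then \<epsilon> i i else 0))"
    by (intro sum.cong refl) (simp add: e1 e2 e3 e4 add.assoc)
  also have "\<dots> = (\<Sum>i<n. \<Sum>j<n. T1 i j + T3 i j) + (\<Sum>i<n. \<Sum>j<n. T4 j i) + (\<Sum>i<n. \<Sum>j<n. T2 j i)
     + (\<Sum>i<n. \<Sum>j<n. emb (if i = j then \<epsilon> i i else 0))"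
    by (simp add: sum.distrib)
  also have "(\<Sum>i<n. \<Sum>j<n. emb (if i = j then \<epsilon> i i else 0)) = emb (\<Sum>i<n. \<epsilon> i i)"
    by (simp add: emb_sum[symmetric] if_distrib[of emb] cong: if_cong)
  also have "(\<Sum>i<n. \<Sum>j<n. T4 j i) = (\<Sum>i<n. \<Sum>j<n. T4 i j)" by (rule sum.swap)
  also have "(\<Sum>i<n. \<Sum>j<n. T2 j i) = (\<Sum>i<n. \<Sum>j<n. T2 i j)" by (rule sum.swap)
  finally show ?thesis unfolding ham by (simp add: sum.distrib algebra_simps)
qed

end

context bosq
begin

lemma psi_hi'[simp]: "\<psi> (i + n) = st (b i)" by (simp add: psi_def)

lemma lc_mode:
  "lc x y = (\<Sum>i<n. emb (x i) * a i + emb (y i) * st (a i) + emb (y (n+i)) * b i + emb (x (n+i)) * st (b i))"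
  unfolding lc_def sum_split2 by (simp add: sum.distrib algebra_simps)

lemma mode_span_lc: "in_mode_span emb st n a b (lc x y)"
  unfolding in_mode_span_def lc_mode
  by (rule exI[of _ x], rule exI[of _ y], rule exI[of _ "\<lambda>i. y (n+i)"], rule exI[of _ "\<lambda>i. x (n+i)"]) simp

lemma lc_of_mode_span:
  assumes "in_mode_span emb st n a b e"
  shows "\<exists>x y. e = lc x y"
proof -
  from assms obtain c1 c2 c3 c4 where e: "e = (\<Sum>i<n. emb (c1 i) * a i + emb (c2 i) * st (a i)
                  + emb (c3 i) * b i + emb (c4 i) * st (b i))" unfolding in_mode_span_def by blast
  define x where "x \<mu> = (if \<mu> < n then c1 \<mu> else c4 (\<mu> - n))" for \<mu>
  define y where "y \<mu> = (if \<mu> < n then c2 \<mu> else c3 (\<mu> - n))" for \<mu>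
  have "e = lc x y" unfolding e lc_mode by (intro sum.cong refl) (simp add: x_def y_def)
  thus ?thesis by blast
qed

lemma lc_x0: "lc x (\<lambda>_. 0) = (\<Sum>\<mu><2*n. emb (x \<mu>) * \<psi> \<mu>)"
  unfolding lc_def by simp
lemma lc_0y: "lc (\<lambda>_. 0) y = (\<Sum>\<mu><2*n. emb (y \<mu>) * st (\<psi> \<mu>))"
  unfolding lc_def by simp

lemma emb_prod4: "emb p * u * (emb q * v) = emb (p * q) * u * v"
proof -
  have "u * (emb q * v) = emb q * (u * v)" by (metis emb_comm mult.assoc)
  thus ?thesis by (simp add: emb_mult mult.assoc)
qed

lemma stu_u:
  "st (lc x (\<lambda>_. 0)) * lc x (\<lambda>_. 0) = (\<Sum>\<mu><2*n. \<Sum>\<nu><2*n. emb (cnj (x \<mu>) * x \<nu>) * st (\<psi> \<mu>) * \<psi> \<nu>)"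
proof -
  have "st (lc x (\<lambda>_. 0)) = (\<Sum>\<mu><2*n. emb (cnj (x \<mu>)) * st (\<psi> \<mu>))"
    unfolding st_lc by (simp add: lc_0y)
  hence "st (lc x (\<lambda>_. 0)) * lc x (\<lambda>_. 0) = (\<Sum>\<mu><2*n. emb (cnj (x \<mu>)) * st (\<psi> \<mu>)) * (\<Sum>\<nu><2*n. emb (x \<nu>) * \<psi> \<nu>)"
    by (simp add: lc_x0)
  also have "\<dots> = (\<Sum>\<mu><2*n. \<Sum>\<nu><2*n. emb (cnj (x \<mu>)) * st (\<psi> \<mu>) * (emb (x \<nu>) * \<psi> \<nu>))"
    by (simp add: sum_product)
  also have "\<dots> = (\<Sum>\<mu><2*n. \<Sum>\<nu><2*n. emb (cnj (x \<mu>) * x \<nu>) * st (\<psi> \<mu>) * \<psi> \<nu>)"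
    by (simp add: emb_prod4)
  finally show ?thesis .
qed

end

context bosq
begin

lemma quad_sum:
  fixes f :: "nat \<Rightarrow> complex" and w :: "nat \<Rightarrow> nat \<Rightarrow> complex"
  shows "(\<Sum>k<K. emb (f k) * (st (lc (w k) (\<lambda>_. 0)) * lc (w k) (\<lambda>_. 0)))
    = (\<Sum>\<mu><2*n. \<Sum>\<nu><2*n. emb (\<Sum>k<K. f k * (cnj (w k \<mu>) * w k \<nu>)) * st (\<psi> \<mu>) * \<psi> \<nu>)"
proof -
  have "(\<Sum>k<K. emb (f k) * (st (lc (w k) (\<lambda>_. 0)) * lc (w k) (\<lambda>_. 0)))
     = (\<Sum>k<K. \<Sum>\<mu><2*n. \<Sum>\<nu><2*n. emb (f k * (cnj (w k \<mu>) * w k \<nu>)) * (st (\<psi> \<mu>) * \<psi> \<nu>))"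
    unfolding stu_u by (simp add: sum_distrib_left emb_emb mult.assoc)
  also have "\<dots> = (\<Sum>\<mu><2*n. \<Sum>k<K. \<Sum>\<nu><2*n. emb (f k * (cnj (w k \<mu>) * w k \<nu>)) * (st (\<psi> \<mu>) * \<psi> \<nu>))"
    by (rule sum.swap)
  also have "\<dots> = (\<Sum>\<mu><2*n. \<Sum>\<nu><2*n. \<Sum>k<K. emb (f k * (cnj (w k \<mu>) * w k \<nu>)) * (st (\<psi> \<mu>) * \<psi> \<nu>))"
    by (rule sum.cong[OF refl], rule sum.swap)
  also have "\<dots> = (\<Sum>\<mu><2*n. \<Sum>\<nu><2*n. emb (\<Sum>k<K. f k * (cnj (w k \<mu>) * w k \<nu>)) * st (\<psi> \<mu>) * \<psi> \<nu>)"
    by (simp add: sum_distrib_right emb_sum mult.assoc)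
  finally show ?thesis .
qed

lemma BV_from_basis:
  fixes w :: "nat \<Rightarrow> nat \<Rightarrow> complex" and l :: "nat \<Rightarrow> real" and M :: "nat \<Rightarrow> nat \<Rightarrow> complex" and cr :: real
  defines "ipp \<equiv> \<lambda>x y. \<Sum>\<mu><2*n. x \<mu> * etac n \<mu> * cnj (y \<mu>)"
  assumes sgn: "\<forall>k<2*n. ipp (w k) (w k) = 1 \<or> ipp (w k) (w k) = -1"
    and orth: "\<forall>k<2*n. \<forall>k'<2*n. k \<noteq> k' \<longrightarrow> ipp (w k) (w k') = 0"
    and Mdec: "\<forall>\<mu><2*n. \<forall>\<nu><2*n. M \<mu> \<nu> = (\<Sum>k<2*n. ipp (w k) (w k) * of_real (l k) * (cnj (w k \<mu>) * w k \<nu>))"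
  shows "BV_diagonalizable emb st n a b (Hq M (of_real cr))"
proof -
  define s where "s k = ipp (w k) (w k)" for k
  define u where "u k = lc (w k) (\<lambda>_. 0)" for k
  define e where "e k = (if s k = 1 then u k else st (u k))" for k
  define lam where "lam k = (if s k = 1 then l k else - l k)" for k
  define L where "L = (\<Sum>k<2*n. if s k = 1 then 0 else l k)"
  have ipkl: "ipp (w k) (w k') = (if k = k' then s k else 0)" if "k < 2*n" "k' < 2*n" for k k'
    using orth that unfolding s_def by auto
  have cu: "comm (u k) (st (u k')) = emb (ipp (w k) (w k'))" for k k'
    unfolding u_def comm_lc_st_lc ipp_def by (simp add: mult_ac)
  have cuu: "comm (u k) (u k') = 0" for k k'
    unfolding u_def comm_lc_lc by simp
  have sk: "s k = 1 \<or> s k = -1" if "k < 2*n" for k using sgn that unfolding s_def by auto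
  have rel: "comm (e k) (st (e k')) = kdelta k k' \<and> comm (e k) (e k') = 0"
    if k: "k < 2*n" and k': "k' < 2*n" for k k'
  proof -
    have diff: "k \<noteq> k'" if "s k \<noteq> s k'" using that by auto
    consider "s k = 1" "s k' = 1" | "s k = 1" "s k' = -1" | "s k = -1" "s k' = 1" | "s k = -1" "s k' = -1"
      using sk[OF k] sk[OF k'] by auto
    thus ?thesis
    proof cases
      case 1 thus ?thesis unfolding e_def kd using cu cuu ipkl[OF k k'] by auto
    next
      case 2
      hence "k \<noteq> k'" using diff by auto
      thus ?thesis using 2 unfolding e_def kd using cu cuu ipkl[OF k k'] by auto
    next
      case 3
      hence "k \<noteq> k'" using diff by auto
      have "comm (st (u k)) (u k') = - comm (u k') (st (u k))" by (rule comm_antisym)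
      thus ?thesis using 3 \<open>k \<noteq> k'\<close> unfolding e_def kd using cu cuu ipkl[OF k' k] comm_st[of "u k" "u k'"] by auto
    next
      case 4
      have "comm (st (u k)) (u k') = - comm (u k') (st (u k))" by (rule comm_antisym)
      thus ?thesis using 4 unfolding e_def kd using cu cuu ipkl[OF k' k] comm_st[of "u k" "u k'"] by auto
    qed
  qed
  have trm: "emb (of_real (lam k)) * st (e k) * e k
      = emb (s k * of_real (l k)) * (st (u k) * u k) + emb (of_real (if s k = 1 then 0 else l k))"
    if k: "k < 2*n" for k
  proof (cases "s k = 1")
    case True thus ?thesis unfolding e_def lam_def by (simp add: mult.assoc)
  next
    case False
    hence s1: "s k = -1" using sk[OF k] by auto
    have "u k * st (u k) = st (u k) * u k + comm (u k) (st (u k))" by (simp add: comm_def)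
    also have "comm (u k) (st (u k)) = - 1" using cu[of k k] unfolding s_def[symmetric] s1 by simp
    finally have eq: "u k * st (u k) = st (u k) * u k - 1" by simp
    show ?thesis using False s1 unfolding e_def lam_def
      by (simp add: mult.assoc eq right_diff_distrib)
  qed
  have "(\<Sum>k<2*n. emb (of_real (lam k)) * st (e k) * e k)
     = (\<Sum>k<2*n. emb (s k * of_real (l k)) * (st (u k) * u k)) + emb (of_real L)"
    by (simp add: trm sum.distrib L_def emb_sum)
  also have "(\<Sum>k<2*n. emb (s k * of_real (l k)) * (st (u k) * u k))
     = (\<Sum>\<mu><2*n. \<Sum>\<nu><2*n. emb (M \<mu> \<nu>) * st (\<psi> \<mu>) * \<psi> \<nu>)"
    unfolding u_def quad_sum using Mdec unfolding s_def by (intro sum.cong refl) simp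
  finally have "Hq M (of_real cr) = (\<Sum>k<2*n. emb (of_real (lam k)) * st (e k) * e k) + emb (of_real (cr - L))"
    unfolding Hq_def by (simp add: algebra_simps)
  moreover have "\<forall>k<2*n. in_mode_span emb st n a b (e k)"
    unfolding e_def u_def st_lc by (auto intro: mode_span_lc)
  ultimately show ?thesis unfolding BV_diagonalizable_def using rel by blast
qed

end

context bosq
begin

lemma emb_lc: "emb c * lc x y = lc (\<lambda>\<nu>. c * x \<nu>) (\<lambda>\<nu>. c * y \<nu>)"
  unfolding lc_def by (simp add: sum_distrib_left distrib_left emb_emb)

lemma comm_lc_Hq:
  assumes DM: "\<forall>\<mu><2*n. \<forall>\<nu><2*n. D \<mu> \<nu> = etac n \<mu> * M \<mu> \<nu>"
    and Mh: "\<forall>\<mu><2*n. \<forall>\<nu><2*n. M \<mu> \<nu> = cnj (M \<nu> \<mu>)"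
  shows "comm (lc x y) (Hq M c) = lc (\<lambda>\<nu>. \<Sum>\<mu><2*n. x \<mu> * D \<mu> \<nu>) (\<lambda>\<nu>. - (\<Sum>\<mu><2*n. y \<mu> * cnj (D \<mu> \<nu>)))"
proof -
  have "comm (lc x y) (Hq M c) = (\<Sum>\<mu><2*n. emb (x \<mu>) * comm (\<psi> \<mu>) (Hq M c) + emb (y \<mu>) * comm (st (\<psi> \<mu>)) (Hq M c))"
    unfolding lc_def comm_sum_left comm_add_left comm_emb_left ..
  also have "\<dots> = (\<Sum>\<mu><2*n. (\<Sum>\<nu><2*n. emb (x \<mu> * D \<mu> \<nu>) * \<psi> \<nu>) + (\<Sum>\<nu><2*n. emb (- y \<mu> * cnj (D \<mu> \<nu>)) * st (\<psi> \<nu>)))"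
  proof (rule sum.cong[OF refl])
    fix \<mu> assume "\<mu> \<in> {..<2*n}"
    hence m: "\<mu> < 2*n" by simp
    have h1: "(\<Sum>\<nu><2*n. emb (etac n \<mu> * M \<mu> \<nu>) * \<psi> \<nu>) = (\<Sum>\<nu><2*n. emb (D \<mu> \<nu>) * \<psi> \<nu>)"
      using DM m by (intro sum.cong refl) simp
    have h2: "(\<Sum>\<nu><2*n. emb (- etac n \<mu> * M \<nu> \<mu>) * st (\<psi> \<nu>)) = (\<Sum>\<nu><2*n. emb (- cnj (D \<mu> \<nu>)) * st (\<psi> \<nu>))"
    proof (rule sum.cong[OF refl])
      fix \<nu> assume "\<nu> \<in> {..<2*n}"
      hence "M \<nu> \<mu> = cnj (M \<mu> \<nu>)" "D \<mu> \<nu> = etac n \<mu> * M \<mu> \<nu>" using Mh[rule_format, of \<nu> \<mu>] DM[rule_format, of \<mu> \<nu>] m by auto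
      thus "emb (- etac n \<mu> * M \<nu> \<mu>) * st (\<psi> \<nu>) = emb (- cnj (D \<mu> \<nu>)) * st (\<psi> \<nu>)" by simp
    qed
    show "emb (x \<mu>) * comm (\<psi> \<mu>) (Hq M c) + emb (y \<mu>) * comm (st (\<psi> \<mu>)) (Hq M c) =
        (\<Sum>\<nu><2*n. emb (x \<mu> * D \<mu> \<nu>) * \<psi> \<nu>) + (\<Sum>\<nu><2*n. emb (- y \<mu> * cnj (D \<mu> \<nu>)) * st (\<psi> \<nu>))"
      unfolding comm_psi_Hq[OF m] comm_stpsi_Hq[OF m] h1 h2
      by (simp add: sum_distrib_left emb_emb)
  qed
  also have "\<dots> = (\<Sum>\<nu><2*n. \<Sum>\<mu><2*n. emb (x \<mu> * D \<mu> \<nu>) * \<psi> \<nu> + emb (- y \<mu> * cnj (D \<mu> \<nu>)) * st (\<psi> \<nu>))"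
    unfolding sum.distrib[symmetric] by (rule sum.swap)
  also have "\<dots> = lc (\<lambda>\<nu>. \<Sum>\<mu><2*n. x \<mu> * D \<mu> \<nu>) (\<lambda>\<nu>. - (\<Sum>\<mu><2*n. y \<mu> * cnj (D \<mu> \<nu>)))"
    unfolding lc_def
    by (rule sum.cong[OF refl]) (simp add: sum_subtractf emb_sum sum_distrib_right sum_negf)
  finally show ?thesis .
qed

lemma BV_data:
  assumes DM: "\<forall>\<mu><2*n. \<forall>\<nu><2*n. D \<mu> \<nu> = etac n \<mu> * M \<mu> \<nu>"
    and Mh: "\<forall>\<mu><2*n. \<forall>\<nu><2*n. M \<mu> \<nu> = cnj (M \<nu> \<mu>)"
    and BV: "BV_diagonalizable emb st n a b (Hq M c)"
  shows "\<exists>(X :: nat \<Rightarrow> nat \<Rightarrow> complex) (Y :: nat \<Rightarrow> nat \<Rightarrow> complex) (lam :: nat \<Rightarrow> real).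
     (\<forall>k<2*n. \<forall>\<nu><2*n. (\<Sum>\<mu><2*n. X k \<mu> * D \<mu> \<nu>) = of_real (lam k) * X k \<nu>) \<and>
     (\<forall>k<2*n. \<forall>\<nu><2*n. (\<Sum>\<mu><2*n. cnj (Y k \<mu>) * D \<mu> \<nu>) = of_real (- lam k) * cnj (Y k \<nu>)) \<and>
     (\<forall>k<2*n. \<forall>l<2*n. (\<Sum>\<mu><2*n. etac n \<mu> * (X k \<mu> * cnj (X l \<mu>) - Y k \<mu> * cnj (Y l \<mu>))) = (if k = l then 1 else 0)) \<and>
     (\<forall>k<2*n. \<forall>l<2*n. (\<Sum>\<mu><2*n. etac n \<mu> * (X k \<mu> * Y l \<mu> - Y k \<mu> * X l \<mu>)) = 0)"
proof -
  from BV obtain e lam C where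
    span: "\<forall>k<2*n. in_mode_span emb st n a b (e k)" and
    rel: "\<forall>k<2*n. \<forall>l<2*n. comm (e k) (st (e l)) = kdelta k l \<and> comm (e k) (e l) = 0" and
    H: "Hq M c = (\<Sum>k<2*n. emb (complex_of_real (lam k)) * st (e k) * e k) + emb (complex_of_real C)"
    unfolding BV_diagonalizable_def by blast
  have "\<forall>k<2*n. \<exists>xy. e k = lc (fst xy) (snd xy)" using lc_of_mode_span span by fastforce
  then obtain XY where XY: "\<forall>k<2*n. e k = lc (fst (XY k)) (snd (XY k))" by metis
  define X where "X k = fst (XY k)" for k
  define Y where "Y k = snd (XY k)" for k
  have eX: "e k = lc (X k) (Y k)" if "k < 2*n" for k using XY that unfolding X_def Y_def by blast
  have G1: "(\<Sum>\<mu><2*n. etac n \<mu> * (X k \<mu> * cnj (X l \<mu>) - Y k \<mu> * cnj (Y l \<mu>))) = (if k = l then 1 else 0)"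
    if "k < 2*n" "l < 2*n" for k l
  proof -
    have "comm (e k) (st (e l)) = kdelta k l" using rel that by blast
    hence "emb (\<Sum>\<mu><2*n. etac n \<mu> * (X k \<mu> * cnj (X l \<mu>) - Y k \<mu> * cnj (Y l \<mu>))) = emb (if k = l then 1 else 0)"
      unfolding eX[OF that(1)] eX[OF that(2)] comm_lc_st_lc kd .
    thus ?thesis by (simp only: emb_eq_iff)
  qed
  have G2: "(\<Sum>\<mu><2*n. etac n \<mu> * (X k \<mu> * Y l \<mu> - Y k \<mu> * X l \<mu>)) = 0"
    if "k < 2*n" "l < 2*n" for k l
  proof -
    have "emb (\<Sum>\<mu><2*n. etac n \<mu> * (X k \<mu> * Y l \<mu> - Y k \<mu> * X l \<mu>)) = 0"
      using rel that eX unfolding comm_lc_lc[symmetric] by simp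
    thus ?thesis using emb_inj by blast
  qed
  have ev: "comm (e k) (Hq M c) = emb (of_real (lam k)) * e k" if k: "k < 2*n" for k
  proof -
    have "comm (e k) (Hq M c) = (\<Sum>l<2*n. emb (complex_of_real (lam l)) * (comm (e k) (st (e l)) * e l + st (e l) * comm (e k) (e l)))"
      unfolding H comm_add_right comm_emb_const comm_sum_right by (simp add: mult.assoc comm_emb_right comm_mult_right)
    also have "\<dots> = (\<Sum>l<2*n. if l = k then emb (complex_of_real (lam k)) * e k else 0)"
      using rel k unfolding kd by (intro sum.cong refl) auto
    also have "\<dots> = emb (of_real (lam k)) * e k" using k by simp
    finally show ?thesis .
  qed
  have eig: "(\<Sum>\<mu><2*n. X k \<mu> * D \<mu> \<nu>) = of_real (lam k) * X k \<nu> \<and>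
      (\<Sum>\<mu><2*n. cnj (Y k \<mu>) * D \<mu> \<nu>) = of_real (- lam k) * cnj (Y k \<nu>)"
    if k: "k < 2*n" and nu: "\<nu> < 2*n" for k \<nu>
  proof -
    have "lc (\<lambda>\<nu>. \<Sum>\<mu><2*n. X k \<mu> * D \<mu> \<nu>) (\<lambda>\<nu>. - (\<Sum>\<mu><2*n. Y k \<mu> * cnj (D \<mu> \<nu>)))
        = lc (\<lambda>\<nu>. of_real (lam k) * X k \<nu>) (\<lambda>\<nu>. of_real (lam k) * Y k \<nu>)"
      using ev[OF k] unfolding eX[OF k] comm_lc_Hq[OF DM Mh] emb_lc .
    from lc_eq[OF this nu] have
      a: "(\<Sum>\<mu><2*n. X k \<mu> * D \<mu> \<nu>) = of_real (lam k) * X k \<nu>" and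
      b: "- (\<Sum>\<mu><2*n. Y k \<mu> * cnj (D \<mu> \<nu>)) = of_real (lam k) * Y k \<nu>" by auto
    from b have "cnj (\<Sum>\<mu><2*n. Y k \<mu> * cnj (D \<mu> \<nu>)) = - cnj (of_real (lam k) * Y k \<nu>)"
      by (metis complex_cnj_minus minus_minus)
    hence "(\<Sum>\<mu><2*n. cnj (Y k \<mu>) * D \<mu> \<nu>) = of_real (- lam k) * cnj (Y k \<nu>)" by simp
    with a show ?thesis by blast
  qed
  show ?thesis
    apply (rule exI[of _ X], rule exI[of _ Y], rule exI[of _ lam])
    using eig G1 G2 by blast
qed

end

locale kre =
  fixes N :: nat and eta :: "nat \<Rightarrow> complex" and Dm :: "nat \<Rightarrow> nat \<Rightarrow> complex"
  assumes eta: "\<And>\<mu>. \<mu> < N \<Longrightarrow> eta \<mu> = 1 \<or> eta \<mu> = -1"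
    and herm: "\<And>\<mu> \<nu>. \<mu> < N \<Longrightarrow> \<nu> < N \<Longrightarrow> Dm \<mu> \<nu> * eta \<nu> = cnj (Dm \<nu> \<mu> * eta \<mu>)"
begin

definition ip :: "(nat \<Rightarrow> complex) \<Rightarrow> (nat \<Rightarrow> complex) \<Rightarrow> complex" where
  "ip x y = (\<Sum>\<mu><N. x \<mu> * eta \<mu> * cnj (y \<mu>))"

definition eig :: "(nat \<Rightarrow> complex) \<Rightarrow> real \<Rightarrow> bool" where
  "eig x l \<longleftrightarrow> (\<forall>\<nu><N. (\<Sum>\<mu><N. x \<mu> * Dm \<mu> \<nu>) = of_real l * x \<nu>)"

definition inspan :: "(nat \<Rightarrow> complex) set \<Rightarrow> (nat \<Rightarrow> complex) \<Rightarrow> bool" where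
  "inspan S v \<longleftrightarrow> (\<exists>c. \<forall>\<nu><N. v \<nu> = (\<Sum>x\<in>S. c x * x \<nu>))"

lemma eta_cnj: "\<mu> < N \<Longrightarrow> cnj (eta \<mu>) = eta \<mu>" using eta[of \<mu>] by auto
lemma eta_sq: "\<mu> < N \<Longrightarrow> eta \<mu> * eta \<mu> = 1" using eta[of \<mu>] by auto
lemma eta_nz: "\<mu> < N \<Longrightarrow> eta \<mu> \<noteq> 0" using eta[of \<mu>] by auto

lemma ip_cnj: "ip y x = cnj (ip x y)"
  unfolding ip_def by (auto intro!: sum.cong simp: eta_cnj)

lemma ip_self_real: "cnj (ip x x) = ip x x" using ip_cnj[of x x] by simp

lemma ip_lin_left: "ip (\<lambda>\<mu>. x \<mu> + c * y \<mu>) z = ip x z + c * ip y z"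
  unfolding ip_def by (simp add: algebra_simps sum.distrib sum_distrib_left)
lemma ip_lin_right: "ip z (\<lambda>\<mu>. x \<mu> + c * y \<mu>) = ip z x + cnj c * ip z y"
  unfolding ip_def by (simp add: algebra_simps sum.distrib sum_distrib_left)
lemma ip_scale_left: "ip (\<lambda>\<mu>. c * y \<mu>) z = c * ip y z"
  unfolding ip_def by (simp add: algebra_simps sum_distrib_left)
lemma ip_scale_right: "ip z (\<lambda>\<mu>. c * y \<mu>) = cnj c * ip z y"
  unfolding ip_def by (simp add: algebra_simps sum_distrib_left)
lemma ip_diff_left: "ip (\<lambda>\<mu>. x \<mu> - c * y \<mu>) z = ip x z - c * ip y z"
  using ip_lin_left[of x "-c" y z] by simp
lemma ip_cong_right: "(\<And>\<nu>. \<nu> < N \<Longrightarrow> v \<nu> = w \<nu>) \<Longrightarrow> ip z v = ip z w"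
  unfolding ip_def by simp
lemma ip_cong_left: "(\<And>\<nu>. \<nu> < N \<Longrightarrow> v \<nu> = w \<nu>) \<Longrightarrow> ip v z = ip w z"
  unfolding ip_def by simp
lemma ip_sum_right: "ip z (\<lambda>\<mu>. \<Sum>x\<in>S. c x * x \<mu>) = (\<Sum>x\<in>S. cnj (c x) * ip z x)"
proof -
  have "ip z (\<lambda>\<mu>. \<Sum>x\<in>S. c x * x \<mu>) = (\<Sum>\<mu><N. \<Sum>x\<in>S. cnj (c x) * (z \<mu> * eta \<mu> * cnj (x \<mu>)))"
    unfolding ip_def by (simp add: sum_distrib_left mult_ac)
  also have "\<dots> = (\<Sum>x\<in>S. \<Sum>\<mu><N. cnj (c x) * (z \<mu> * eta \<mu> * cnj (x \<mu>)))" by (rule sum.swap)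
  finally show ?thesis unfolding ip_def by (simp add: sum_distrib_left)
qed
lemma ip_sum_left: "ip (\<lambda>\<mu>. \<Sum>x\<in>S. c x * x \<mu>) z = (\<Sum>x\<in>S. c x * ip x z)"
proof -
  have "ip (\<lambda>\<mu>. \<Sum>x\<in>S. c x * x \<mu>) z = (\<Sum>\<mu><N. \<Sum>x\<in>S. c x * (x \<mu> * eta \<mu> * cnj (z \<mu>)))"
    unfolding ip_def by (simp add: sum_distrib_right mult.assoc)
  also have "\<dots> = (\<Sum>x\<in>S. \<Sum>\<mu><N. c x * (x \<mu> * eta \<mu> * cnj (z \<mu>)))" by (rule sum.swap)
  finally show ?thesis unfolding ip_def by (simp add: sum_distrib_left)
qed
lemma sd1: "finite A \<Longrightarrow> (\<Sum>\<mu>\<in>A. (if \<mu> = \<nu> then 1 else 0) * f \<mu>) = (if \<nu> \<in> A then f \<nu> else (0::'b::comm_ring_1))"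
  by (subst sum.cong[OF refl, of _ _ "\<lambda>\<mu>. if \<mu> = \<nu> then f \<nu> else 0"]) auto
lemma sd2: "finite A \<Longrightarrow> (\<Sum>\<mu>\<in>A. f \<mu> * (if \<mu> = \<nu> then 1 else 0)) = (if \<nu> \<in> A then f \<nu> else (0::'b::comm_ring_1))"
  by (subst sum.cong[OF refl, of _ _ "\<lambda>\<mu>. if \<mu> = \<nu> then f \<nu> else 0"]) auto
lemma ip_unit: "\<nu> < N \<Longrightarrow> ip z (\<lambda>\<mu>. if \<mu> = \<nu> then 1 else 0) = z \<nu> * eta \<nu>"
proof -
  assume "\<nu> < N"
  have "ip z (\<lambda>\<mu>. if \<mu> = \<nu> then 1 else 0) = (\<Sum>\<mu><N. (z \<mu> * eta \<mu>) * (if \<mu> = \<nu> then 1 else 0))"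
    unfolding ip_def by (rule sum.cong) auto
  also have "\<dots> = z \<nu> * eta \<nu>" using \<open>\<nu> < N\<close> by (subst sd2) auto
  finally show ?thesis .
qed
lemma ip_unit_left: "\<nu> < N \<Longrightarrow> ip (\<lambda>\<mu>. if \<mu> = \<nu> then 1 else 0) z = eta \<nu> * cnj (z \<nu>)"
proof -
  assume "\<nu> < N"
  have "ip (\<lambda>\<mu>. if \<mu> = \<nu> then 1 else 0) z = (\<Sum>\<mu><N. (if \<mu> = \<nu> then 1 else 0) * (eta \<mu> * cnj (z \<mu>)))"
    unfolding ip_def by (rule sum.cong) auto
  also have "\<dots> = eta \<nu> * cnj (z \<nu>)" using \<open>\<nu> < N\<close> by (subst sd1) auto
  finally show ?thesis .
qed

lemma eig_ip:
  assumes x: "eig x l" and y: "eig y k" and nz: "ip x y \<noteq> 0"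
  shows "l = k"
proof -
  define L where "L = (\<Sum>\<nu><N. (\<Sum>\<mu><N. x \<mu> * Dm \<mu> \<nu>) * (eta \<nu> * cnj (y \<nu>)))"
  have "L = (\<Sum>\<nu><N. of_real l * (x \<nu> * (eta \<nu> * cnj (y \<nu>))))"
    unfolding L_def using x unfolding eig_def by (intro sum.cong refl) (simp add: mult.assoc)
  also have "\<dots> = of_real l * ip x y" unfolding ip_def sum_distrib_left[symmetric] by (simp add: mult.assoc)
  finally have L1: "L = of_real l * ip x y" .
  have "L = (\<Sum>\<nu><N. \<Sum>\<mu><N. x \<mu> * (Dm \<mu> \<nu> * (eta \<nu> * cnj (y \<nu>))))"
    unfolding L_def sum_distrib_right by (simp add: mult.assoc)
  also have "\<dots> = (\<Sum>\<mu><N. \<Sum>\<nu><N. x \<mu> * (Dm \<mu> \<nu> * (eta \<nu> * cnj (y \<nu>))))" by (rule sum.swap)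
  also have "\<dots> = (\<Sum>\<mu><N. x \<mu> * (eta \<mu> * cnj (\<Sum>\<nu><N. y \<nu> * Dm \<nu> \<mu>)))"
  proof (rule sum.cong[OF refl])
    fix \<mu> assume "\<mu> \<in> {..<N}"
    hence m: "\<mu> < N" by simp
    have "(\<Sum>\<nu><N. x \<mu> * (Dm \<mu> \<nu> * (eta \<nu> * cnj (y \<nu>)))) = (\<Sum>\<nu><N. x \<mu> * (eta \<mu> * (cnj (y \<nu>) * cnj (Dm \<nu> \<mu>))))"
    proof (rule sum.cong[OF refl])
      fix \<nu> assume "\<nu> \<in> {..<N}"
      hence "Dm \<mu> \<nu> * eta \<nu> = cnj (Dm \<nu> \<mu>) * eta \<mu>" using herm[OF m] eta_cnj[OF m] by simp
      thus "x \<mu> * (Dm \<mu> \<nu> * (eta \<nu> * cnj (y \<nu>))) = x \<mu> * (eta \<mu> * (cnj (y \<nu>) * cnj (Dm \<nu> \<mu>)))"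
        by (simp add: mult.assoc[symmetric])
    qed
    also have "\<dots> = x \<mu> * (eta \<mu> * cnj (\<Sum>\<nu><N. y \<nu> * Dm \<nu> \<mu>))"
      unfolding cnj_sum complex_cnj_mult sum_distrib_left ..
    finally show "(\<Sum>\<nu><N. x \<mu> * (Dm \<mu> \<nu> * (eta \<nu> * cnj (y \<nu>)))) = x \<mu> * (eta \<mu> * cnj (\<Sum>\<nu><N. y \<nu> * Dm \<nu> \<mu>))" .
  qed
  also have "\<dots> = (\<Sum>\<mu><N. of_real k * (x \<mu> * (eta \<mu> * cnj (y \<mu>))))"
    using y unfolding eig_def by (intro sum.cong refl) (simp add: mult.commute mult.left_commute)
  also have "\<dots> = of_real k * ip x y" unfolding ip_def sum_distrib_left[symmetric] by (simp add: mult.assoc)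
  finally have "of_real l * ip x y = of_real k * ip x y" using L1 by simp
  with nz show ?thesis by simp
qed

lemma eig_scale: assumes "eig y l" shows "eig (\<lambda>\<mu>. c * y \<mu>) l"
  unfolding eig_def
proof (intro allI impI)
  fix \<nu> assume "\<nu> < N"
  have "(\<Sum>\<mu><N. c * y \<mu> * Dm \<mu> \<nu>) = c * (\<Sum>\<mu><N. y \<mu> * Dm \<mu> \<nu>)" by (simp add: sum_distrib_left mult.assoc)
  thus "(\<Sum>\<mu><N. c * y \<mu> * Dm \<mu> \<nu>) = of_real l * (c * y \<nu>)" using assms \<open>\<nu> < N\<close> unfolding eig_def by simp
qed

lemma eig_add: assumes "eig x l" "eig y l" shows "eig (\<lambda>\<mu>. x \<mu> + y \<mu>) l"
  using assms unfolding eig_def by (simp add: sum.distrib distrib_left distrib_right)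

lemma eig_lin: "eig x l \<Longrightarrow> eig y l \<Longrightarrow> eig (\<lambda>\<mu>. x \<mu> + c * y \<mu>) l"
  using eig_add[of x l "\<lambda>\<mu>. c * y \<mu>"] eig_scale[of y l c] by simp

lemma inspan_mem: assumes "finite S" "x \<in> S" shows "inspan S x"
  unfolding inspan_def
proof (rule exI[of _ "\<lambda>y. if y = x then 1 else 0"], intro allI impI)
  fix \<nu> assume "\<nu> < N"
  have "(\<Sum>y\<in>S. (if y = x then 1 else 0) * y \<nu>) = (\<Sum>y\<in>S. if y = x then x \<nu> else 0)"
    by (rule sum.cong) auto
  also have "\<dots> = x \<nu>" using assms by simp
  finally show "x \<nu> = (\<Sum>y\<in>S. (if y = x then 1 else 0) * y \<nu>)" by simp
qed

lemma inspan_lin: "inspan S x \<Longrightarrow> inspan S y \<Longrightarrow> inspan S (\<lambda>\<mu>. x \<mu> + d * y \<mu>)"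
  unfolding inspan_def
proof (elim exE)
  fix c1 c2 assume c1: "\<forall>\<nu><N. x \<nu> = (\<Sum>z\<in>S. c1 z * z \<nu>)" and c2: "\<forall>\<nu><N. y \<nu> = (\<Sum>z\<in>S. c2 z * z \<nu>)"
  show "\<exists>c. \<forall>\<nu><N. x \<nu> + d * y \<nu> = (\<Sum>z\<in>S. c z * z \<nu>)"
    by (rule exI[of _ "\<lambda>z. c1 z + d * c2 z"]) (simp add: c1 c2 algebra_simps sum.distrib sum_distrib_left)
qed

lemma inspan_cong: "inspan S v \<Longrightarrow> (\<And>\<nu>. \<nu> < N \<Longrightarrow> v \<nu> = w \<nu>) \<Longrightarrow> inspan S w"
  unfolding inspan_def by auto

lemma inspan_zero: "(\<And>\<nu>. \<nu> < N \<Longrightarrow> v \<nu> = 0) \<Longrightarrow> inspan S v"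
  unfolding inspan_def by (rule exI[of _ "\<lambda>_. 0"]) simp

lemma inspan_trans:
  assumes "\<forall>x\<in>S. inspan T x" "inspan S v"
  shows "inspan T v"
proof -
  obtain c where c: "\<forall>\<nu><N. v \<nu> = (\<Sum>x\<in>S. c x * x \<nu>)" using assms(2) unfolding inspan_def by blast
  have "\<forall>x\<in>S. \<exists>d. \<forall>\<nu><N. x \<nu> = (\<Sum>y\<in>T. d y * y \<nu>)" using assms(1) unfolding inspan_def by blast
  then obtain d where d: "\<forall>x\<in>S. \<forall>\<nu><N. x \<nu> = (\<Sum>y\<in>T. d x y * y \<nu>)" by metis
  show ?thesis unfolding inspan_def
  proof (rule exI[of _ "\<lambda>y. \<Sum>x\<in>S. c x * d x y"], intro allI impI)
    fix \<nu> assume "\<nu> < N"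
    have "v \<nu> = (\<Sum>x\<in>S. c x * (\<Sum>y\<in>T. d x y * y \<nu>))" using c d \<open>\<nu> < N\<close> by (auto intro!: sum.cong)
    also have "\<dots> = (\<Sum>y\<in>T. (\<Sum>x\<in>S. c x * d x y) * y \<nu>)"
      by (simp add: sum_distrib_left sum_distrib_right mult_ac) (rule sum.swap)
    finally show "v \<nu> = (\<Sum>y\<in>T. (\<Sum>x\<in>S. c x * d x y) * y \<nu>)" .
  qed
qed

lemma inspan_mono: "finite T \<Longrightarrow> S \<subseteq> T \<Longrightarrow> inspan S v \<Longrightarrow> inspan T v"
  by (rule inspan_trans[of S T v]) (auto intro: inspan_mem)

end

context kre
begin

definition kinv :: "(nat \<Rightarrow> complex) set \<Rightarrow> (nat \<Rightarrow> complex) set \<Rightarrow> bool" where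
  "kinv W R \<longleftrightarrow> finite W \<and> finite R \<and>
     (\<forall>w\<in>W. (\<exists>l. eig w l) \<and> (ip w w = 1 \<or> ip w w = -1)) \<and>
     (\<forall>w\<in>W. \<forall>w'\<in>W. w \<noteq> w' \<longrightarrow> ip w w' = 0) \<and>
     (\<forall>x\<in>R. \<exists>l. eig x l) \<and>
     (\<forall>w\<in>W. \<forall>x\<in>R. ip x w = 0) \<and>
     (\<forall>v. inspan (W \<union> R) v)"

lemma step_b:
  assumes I: "kinv W R" and r: "r \<in> R" and q: "ip r r \<noteq> 0"
  shows "\<exists>W' R'. kinv W' R' \<and> card R' < card R"
proof -
  from I have fW: "finite W" and fR: "finite R"
    and Wn: "\<forall>w\<in>W. (\<exists>l. eig w l) \<and> (ip w w = 1 \<or> ip w w = -1)"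
    and Wo: "\<forall>w\<in>W. \<forall>w'\<in>W. w \<noteq> w' \<longrightarrow> ip w w' = 0"
    and Re: "\<forall>x\<in>R. \<exists>l. eig x l"
    and WR: "\<forall>w\<in>W. \<forall>x\<in>R. ip x w = 0"
    and sp: "\<forall>v. inspan (W \<union> R) v"
    unfolding kinv_def by auto
  define qr where "qr = Re (ip r r)"
  have qq: "ip r r = of_real qr" unfolding qr_def using ip_self_real[of r]
    by (simp add: complex_eq_iff)
  have qr0: "qr \<noteq> 0" using q qq by auto
  define s where "s = 1 / sqrt \<bar>qr\<bar>"
  have s0: "s \<noteq> 0" using qr0 unfolding s_def by simp
  define w where "w = (\<lambda>\<mu>. of_real s * r \<mu>)"
  obtain l where rl: "eig r l" using Re r by blast
  have ww: "ip w w = of_real (s * s * qr)" unfolding w_def ip_scale_left ip_scale_right qq by simp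
  have ssq: "s * s * qr = 1 \<or> s * s * qr = -1"
  proof -
    have "s * s = 1 / \<bar>qr\<bar>" unfolding s_def using qr0
      by (simp add: divide_simps)
    thus ?thesis using qr0 by (cases "qr > 0") auto
  qed
  have ww1: "ip w w = 1 \<or> ip w w = -1" using ssq ww by (metis of_real_1 of_real_minus)
  define f where "f y = (\<lambda>\<mu>. y \<mu> - (ip y r / ip r r) * r \<mu>)" for y
  define W' where "W' = insert w W"
  define R' where "R' = f ` (R - {r})"
  have "kinv W' R'" unfolding kinv_def
  proof (intro conjI)
    show "finite W'" unfolding W'_def using fW by simp
    show "finite R'" unfolding R'_def using fR by simp
    show "\<forall>w\<in>W'. (\<exists>l. eig w l) \<and> (ip w w = 1 \<or> ip w w = -1)"
      unfolding W'_def using Wn ww1 eig_scale[OF rl] unfolding w_def by auto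
    have ipw: "ip w w0 = 0" if "w0 \<in> W" for w0
      unfolding w_def ip_scale_left using WR r that by simp
    show "\<forall>w\<in>W'. \<forall>w'\<in>W'. w \<noteq> w' \<longrightarrow> ip w w' = 0"
    proof (intro ballI impI)
      fix u v assume u: "u \<in> W'" and v: "v \<in> W'" and uv: "u \<noteq> v"
      show "ip u v = 0"
      proof (cases "u = w")
        case True
        hence "v \<in> W" using v uv unfolding W'_def by auto
        thus ?thesis using ipw True by simp
      next
        case False
        hence uW: "u \<in> W" using u unfolding W'_def by auto
        show ?thesis
        proof (cases "v = w")
          case True
          have "ip u v = cnj (ip v u)" by (rule ip_cnj)
          thus ?thesis using ipw[OF uW] True by simp
        next
          case False
          hence "v \<in> W" using v unfolding W'_def by auto
          thus ?thesis using Wo uW uv by blast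
        qed
      qed
    qed
    show "\<forall>x\<in>R'. \<exists>l. eig x l"
    proof
      fix x assume "x \<in> R'"
      then obtain y where y: "y \<in> R" "x = f y" unfolding R'_def by auto
      obtain l' where yl: "eig y l'" using Re y by blast
      show "\<exists>l. eig x l"
      proof (cases "ip y r = 0")
        case True
        hence "x = y" unfolding y f_def by simp
        thus ?thesis using yl by blast
      next
        case False
        hence "l' = l" using eig_ip[OF yl rl] by simp
        hence "eig x l" unfolding y f_def using eig_lin[OF _ rl, of y "- (ip y r / ip r r)"] yl by simp
        thus ?thesis by blast
      qed
    qed
    show "\<forall>w0\<in>W'. \<forall>x\<in>R'. ip x w0 = 0"
    proof (intro ballI)
      fix w0 x assume w0: "w0 \<in> W'" and "x \<in> R'"
      then obtain y where y: "y \<in> R" "x = f y" unfolding R'_def by auto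
      show "ip x w0 = 0"
      proof (cases "w0 = w")
        case True
        show ?thesis unfolding True y f_def ip_diff_left w_def ip_scale_right using q by simp
      next
        case False
        hence "w0 \<in> W" using w0 unfolding W'_def by auto
        thus ?thesis unfolding y f_def ip_diff_left using WR y r by simp
      qed
    qed
    have fin': "finite (W' \<union> R')" using \<open>finite W'\<close> \<open>finite R'\<close> by simp
    have memb: "inspan (W' \<union> R') x" if "x \<in> W \<union> R" for x
    proof -
      have wsp: "inspan (W' \<union> R') w" using fin' by (rule inspan_mem) (simp add: W'_def)
      have rsp: "inspan (W' \<union> R') r"
      proof -
        have "inspan (W' \<union> R') (\<lambda>\<mu>. (\<lambda>\<mu>. 0) \<mu> + of_real (1/s) * w \<mu>)"
          by (rule inspan_lin[OF inspan_zero wsp]) simp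
        thus ?thesis by (rule inspan_cong) (simp add: w_def s0)
      qed
      show ?thesis
      proof (cases "x \<in> W")
        case True thus ?thesis using fin' by (intro inspan_mem) (auto simp: W'_def)
      next
        case False
        hence xR: "x \<in> R" using that by auto
        show ?thesis
        proof (cases "x = r")
          case True thus ?thesis using rsp by simp
        next
          case False
          hence "f x \<in> R'" using xR unfolding R'_def by auto
          hence "inspan (W' \<union> R') (f x)" using fin' by (intro inspan_mem) auto
          from inspan_lin[OF this rsp, of "ip x r / ip r r"] show ?thesis
            by (rule inspan_cong) (simp add: f_def)
        qed
      qed
    qed
    show "\<forall>v. inspan (W' \<union> R') v" using inspan_trans[of "W \<union> R"] memb sp by blast
  qed
  moreover have "card R' < card R"
  proof -
    have "card R' \<le> card (R - {r})" unfolding R'_def by (rule card_image_le) (simp add: fR)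
    also have "\<dots> < card R" using fR r by (meson card_Diff1_less)
    finally show ?thesis .
  qed
  ultimately show ?thesis by blast
qed

end

context kre
begin

lemma inv_unfold:
  assumes "kinv W R"
  shows "finite W" "finite R" "\<forall>w\<in>W. (\<exists>l. eig w l) \<and> (ip w w = 1 \<or> ip w w = -1)"
    "\<forall>w\<in>W. \<forall>w'\<in>W. w \<noteq> w' \<longrightarrow> ip w w' = 0" "\<forall>x\<in>R. \<exists>l. eig x l"
    "\<forall>w\<in>W. \<forall>x\<in>R. ip x w = 0" "\<forall>v. inspan (W \<union> R) v"
  using assms unfolding kinv_def by blast+

lemma step_zero:
  assumes I: "kinv W R" and z: "z \<in> R" and z0: "\<forall>\<nu><N. z \<nu> = 0"
  shows "kinv W (R - {z})"
proof -
  note U = inv_unfold[OF I]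
  have fin: "finite (W \<union> (R - {z}))" using U by simp
  have "inspan (W \<union> (R - {z})) x" if "x \<in> W \<union> R" for x
  proof (cases "x = z")
    case True thus ?thesis using z0 by (intro inspan_zero) auto
  next
    case False thus ?thesis using that fin by (intro inspan_mem) auto
  qed
  hence "\<forall>v. inspan (W \<union> (R - {z})) v" using U(7) inspan_trans[of "W \<union> R"] by blast
  thus ?thesis using U unfolding kinv_def by auto
qed

lemma step_c:
  assumes I: "kinv W R" and r: "r \<in> R" and rnz: "\<exists>\<nu><N. r \<nu> \<noteq> 0"
    and iso: "\<forall>x\<in>R. ip x x = 0"
  shows "\<exists>R1. kinv W R1 \<and> card R1 \<le> card R \<and> (\<exists>r2\<in>R1. ip r2 r2 \<noteq> 0)"
proof -
  note U = inv_unfold[OF I]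
  have "\<exists>r'\<in>R. ip r r' \<noteq> 0"
  proof (rule ccontr)
    assume "\<not> ?thesis"
    hence h: "\<forall>x\<in>W \<union> R. ip r x = 0" using U(6) r by blast
    obtain \<nu> where nu: "\<nu> < N" "r \<nu> \<noteq> 0" using rnz by blast
    obtain c where c: "\<forall>\<mu><N. (if \<mu> = \<nu> then 1 else 0) = (\<Sum>x\<in>W \<union> R. c x * x \<mu>)"
      using spec[OF U(7), of "\<lambda>\<mu>. if \<mu> = \<nu> then 1 else 0"] unfolding inspan_def by blast
    have "ip r (\<lambda>\<mu>. if \<mu> = \<nu> then 1 else 0) = ip r (\<lambda>\<mu>. \<Sum>x\<in>W \<union> R. c x * x \<mu>)"
      by (rule ip_cong_right) (simp add: c)
    also have "\<dots> = 0" unfolding ip_sum_right using h by simp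
    finally have "r \<nu> * eta \<nu> = 0" using ip_unit[OF nu(1)] by simp
    thus False using nu eta_nz[OF nu(1)] by simp
  qed
  then obtain r' where r': "r' \<in> R" "ip r r' \<noteq> 0" by blast
  have rr': "r' \<noteq> r" using r' iso r by auto
  obtain l where rl: "eig r l" using U(5) r by blast
  obtain l' where rl': "eig r' l'" using U(5) r' by blast
  have "l = l'" using eig_ip[OF rl rl' r'(2)] .
  define t where "t = ip r r'"
  define r2 where "r2 = (\<lambda>\<mu>. r \<mu> + t * r' \<mu>)"
  have e2: "eig r2 l" unfolding r2_def using eig_lin[OF rl, of r' t] rl' \<open>l = l'\<close> by simp
  have "ip r2 r2 = ip r r + cnj t * ip r r' + t * (ip r' r + cnj t * ip r' r')"
    unfolding r2_def ip_lin_left ip_lin_right by (simp add: algebra_simps)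
  also have "ip r' r = cnj t" unfolding t_def by (rule ip_cnj)
  finally have "ip r2 r2 = 2 * (t * cnj t)" using iso r r' by (simp add: t_def algebra_simps)
  hence n2: "ip r2 r2 \<noteq> 0" using r'(2) unfolding t_def by simp
  define R1 where "R1 = insert r2 (R - {r})"
  have "kinv W R1" unfolding kinv_def
  proof (intro conjI)
    show "finite W" "finite R1" using U unfolding R1_def by auto
    show "\<forall>w\<in>W. (\<exists>l. eig w l) \<and> (ip w w = 1 \<or> ip w w = -1)" using U by blast
    show "\<forall>w\<in>W. \<forall>w'\<in>W. w \<noteq> w' \<longrightarrow> ip w w' = 0" using U by blast
    show "\<forall>x\<in>R1. \<exists>l. eig x l" unfolding R1_def using U(5) e2 by blast
    show "\<forall>w\<in>W. \<forall>x\<in>R1. ip x w = 0" unfolding R1_def using U(6) r r'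
      by (auto simp: r2_def ip_lin_left)
    have fin: "finite (W \<union> R1)" using U unfolding R1_def by auto
    have "inspan (W \<union> R1) x" if "x \<in> W \<union> R" for x
    proof (cases "x = r")
      case True
      have a: "inspan (W \<union> R1) r2" using fin by (rule inspan_mem) (simp add: R1_def)
      have b: "inspan (W \<union> R1) r'" using fin by (rule inspan_mem) (simp add: R1_def r' rr')
      from inspan_lin[OF a b, of "- t"] show ?thesis unfolding True
        by (rule inspan_cong) (simp add: r2_def)
    next
      case False thus ?thesis using that fin by (intro inspan_mem) (auto simp: R1_def)
    qed
    hence "\<forall>x\<in>W \<union> R. inspan (W \<union> R1) x" by blast
    thus "\<forall>v. inspan (W \<union> R1) v" by (intro allI inspan_trans[OF _ spec[OF U(7)]])
  qed
  moreover have "card R1 \<le> card R"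
  proof -
    have "card R1 \<le> Suc (card (R - {r}))" unfolding R1_def using U(2) by (simp add: card_insert_if)
    also have "\<dots> = card R" using card.remove[OF U(2) r] by simp
    finally show ?thesis .
  qed
  moreover have "r2 \<in> R1" unfolding R1_def by simp
  ultimately show ?thesis using n2 by blast
qed

lemma core_ind: "kinv W R \<Longrightarrow> \<exists>W'. kinv W' {}"
proof (induction "card R" arbitrary: W R rule: less_induct)
  case less
  show ?case
  proof (cases "R = {}")
    case True thus ?thesis using less.prems by blast
  next
    case False
    then obtain r where r: "r \<in> R" by blast
    note U = inv_unfold[OF less.prems]
    show ?thesis
    proof (cases "\<exists>z\<in>R. \<forall>\<nu><N. z \<nu> = 0")
      case True
      then obtain z where z: "z \<in> R" "\<forall>\<nu><N. z \<nu> = 0" by blast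
      have "card (R - {z}) < card R" using U(2) z(1) by (meson card_Diff1_less)
      thus ?thesis using less.hyps step_zero[OF less.prems z] by blast
    next
      case nz: False
      show ?thesis
      proof (cases "\<exists>x\<in>R. ip x x \<noteq> 0")
        case True
        then obtain x where "x \<in> R" "ip x x \<noteq> 0" by blast
        from step_b[OF less.prems this] obtain W' R' where "kinv W' R'" "card R' < card R" by blast
        thus ?thesis using less.hyps by blast
      next
        case False
        have "\<exists>\<nu><N. r \<nu> \<noteq> 0" using nz r by blast
        from step_c[OF less.prems r this] False obtain R1 r2 where
          R1: "kinv W R1" "card R1 \<le> card R" "r2 \<in> R1" "ip r2 r2 \<noteq> 0" by auto
        from step_b[OF R1(1) R1(3,4)] obtain W' R' where "kinv W' R'" "card R' < card R1" by blast
        thus ?thesis using less.hyps R1(2) by (meson order_less_le_trans)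
      qed
    qed
  qed
qed

end

context kre
begin

lemma final_rel:
  assumes I: "kinv W {}"
  shows "\<And>\<nu> \<mu>. \<nu> < N \<Longrightarrow> \<mu> < N \<Longrightarrow> (\<Sum>w\<in>W. ip w w * eta \<nu> * cnj (w \<nu>) * w \<mu>) = (if \<nu> = \<mu> then 1 else 0)"
    and "card W = N"
proof -
  note U = inv_unfold[OF I]
  have fW: "finite W" using U by simp
  have s2: "ip w w * ip w w = 1" if "w \<in> W" for w using U(3) that by auto
  have key: "(\<Sum>w\<in>W. ip w w * eta \<nu> * cnj (w \<nu>) * w \<mu>) = (if \<nu> = \<mu> then 1 else 0)"
    if nu: "\<nu> < N" and mu: "\<mu> < N" for \<nu> \<mu>
  proof -
    obtain c where c: "\<forall>\<mu><N. (if \<mu> = \<nu> then 1 else 0) = (\<Sum>x\<in>W. c x * x \<mu>)"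
      using spec[OF U(7), of "\<lambda>\<mu>. if \<mu> = \<nu> then 1 else 0"] unfolding inspan_def by auto
    have cw: "c w' = ip w' w' * eta \<nu> * cnj (w' \<nu>)" if w': "w' \<in> W" for w'
    proof -
      have "eta \<nu> * cnj (w' \<nu>) = ip (\<lambda>\<mu>. if \<mu> = \<nu> then 1 else 0) w'" using ip_unit_left[OF nu] by simp
      also have "\<dots> = ip (\<lambda>\<mu>. \<Sum>x\<in>W. c x * x \<mu>) w'" by (rule ip_cong_left) (simp add: c)
      also have "\<dots> = (\<Sum>x\<in>W. c x * ip x w')" by (rule ip_sum_left)
      also have "\<dots> = (\<Sum>x\<in>W. if x = w' then c w' * ip w' w' else 0)"
        by (rule sum.cong[OF refl]) (use U(4) w' in auto)
      also have "\<dots> = c w' * ip w' w'" using fW w' by simp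
      finally have "ip w' w' * (eta \<nu> * cnj (w' \<nu>)) = c w' * (ip w' w' * ip w' w')" by simp
      thus ?thesis using s2[OF w'] by (simp add: mult_ac)
    qed
    have "(if \<mu> = \<nu> then 1 else 0) = (\<Sum>x\<in>W. c x * x \<mu>)" using c mu by blast
    also have "\<dots> = (\<Sum>w\<in>W. ip w w * eta \<nu> * cnj (w \<nu>) * w \<mu>)" by (rule sum.cong) (simp_all add: cw)
    finally show ?thesis by auto
  qed
  thus "\<And>\<nu> \<mu>. \<nu> < N \<Longrightarrow> \<mu> < N \<Longrightarrow> (\<Sum>w\<in>W. ip w w * eta \<nu> * cnj (w \<nu>) * w \<mu>) = (if \<nu> = \<mu> then 1 else 0)" .
  have "of_nat N = (\<Sum>\<nu><N. (1::complex))" by simp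
  also have "\<dots> = (\<Sum>\<nu><N. \<Sum>w\<in>W. ip w w * eta \<nu> * cnj (w \<nu>) * w \<nu>)"
    by (rule sum.cong) (simp_all add: key)
  also have "\<dots> = (\<Sum>w\<in>W. \<Sum>\<nu><N. ip w w * eta \<nu> * cnj (w \<nu>) * w \<nu>)" by (rule sum.swap)
  also have "\<dots> = (\<Sum>w\<in>W. ip w w * ip w w)"
    by (rule sum.cong[OF refl]) (simp add: ip_def sum_distrib_left mult_ac)
  also have "\<dots> = (\<Sum>w\<in>W. 1)" by (rule sum.cong) (simp_all add: s2)
  also have "\<dots> = of_nat (card W)" by simp
  finally show "card W = N" by (metis of_nat_eq_iff)
qed

theorem core:
  assumes fS: "finite S" and eS: "\<forall>x\<in>S. \<exists>l. eig x l" and sS: "\<forall>v. inspan S v"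
  shows "\<exists>(w :: nat \<Rightarrow> nat \<Rightarrow> complex) (l :: nat \<Rightarrow> real).
     (\<forall>k<N. eig (w k) (l k)) \<and>
     (\<forall>k<N. ip (w k) (w k) = 1 \<or> ip (w k) (w k) = -1) \<and>
     (\<forall>k<N. \<forall>k'<N. k \<noteq> k' \<longrightarrow> ip (w k) (w k') = 0) \<and>
     (\<forall>\<nu><N. \<forall>\<mu><N. (\<Sum>k<N. ip (w k) (w k) * eta \<nu> * cnj (w k \<nu>) * w k \<mu>) = (if \<nu> = \<mu> then 1 else 0))"
proof -
  have "kinv {} S" unfolding kinv_def using fS eS sS by auto
  from core_ind[OF this] obtain W where I: "kinv W {}" by blast
  note U = inv_unfold[OF I]
  note F = final_rel[OF I]
  obtain g where g: "bij_betw g {0..<card W} W" using ex_bij_betw_nat_finite[OF U(1)] by blast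
  hence g': "bij_betw g {..<N} W" using F(2) by (simp add: atLeast0LessThan)
  define l where "l k = (SOME l. eig (g k) l)" for k
  have gW: "g k \<in> W" if "k < N" for k using g' that bij_betwE by blast
  have "eig (g k) (l k)" if "k < N" for k
    unfolding l_def using U(3) gW[OF that] by (metis someI_ex)
  moreover have "\<forall>k<N. ip (g k) (g k) = 1 \<or> ip (g k) (g k) = -1" using U(3) gW by blast
  moreover have "\<forall>k<N. \<forall>k'<N. k \<noteq> k' \<longrightarrow> ip (g k) (g k') = 0"
  proof (intro allI impI)
    fix k k' assume "k < N" "k' < N" "k \<noteq> k'"
    hence "g k \<noteq> g k'" using g' unfolding bij_betw_def inj_on_def by auto
    thus "ip (g k) (g k') = 0" using U(4) gW \<open>k < N\<close> \<open>k' < N\<close> by blast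
  qed
  moreover have "\<forall>\<nu><N. \<forall>\<mu><N. (\<Sum>k<N. ip (g k) (g k) * eta \<nu> * cnj (g k \<nu>) * g k \<mu>) = (if \<nu> = \<mu> then 1 else 0)"
  proof (intro allI impI)
    fix \<nu> \<mu> assume "\<nu> < N" "\<mu> < N"
    have "(\<Sum>k<N. ip (g k) (g k) * eta \<nu> * cnj (g k \<nu>) * g k \<mu>) = (\<Sum>w\<in>W. ip w w * eta \<nu> * cnj (w \<nu>) * w \<mu>)"
      using sum.reindex_bij_betw[OF g', of "\<lambda>w. ip w w * eta \<nu> * cnj (w \<nu>) * w \<mu>"] by simp
    thus "(\<Sum>k<N. ip (g k) (g k) * eta \<nu> * cnj (g k \<nu>) * g k \<mu>) = (if \<nu> = \<mu> then 1 else 0)"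
      using F(1)[OF \<open>\<nu> < N\<close> \<open>\<mu> < N\<close>] by simp
  qed
  ultimately show ?thesis by blast
qed

end

context kre
begin

lemma inspan_family: fixes K :: nat
  assumes v: "\<forall>\<nu><N. v \<nu> = (\<Sum>k<K. c k * f k \<nu>)"
  shows "inspan (f ` {..<K}) v"
proof -
  have "(K'::nat) \<le> K \<Longrightarrow> inspan (f ` {..<K}) (\<lambda>\<nu>. \<Sum>k<K'. c k * f k \<nu>)" for K'
  proof (induction K')
    case 0 show ?case by (rule inspan_zero) simp
  next
    case (Suc K')
    have a: "inspan (f ` {..<K}) (\<lambda>\<nu>. \<Sum>k<K'. c k * f k \<nu>)" using Suc by simp
    have b: "inspan (f ` {..<K}) (f K')" using Suc by (intro inspan_mem) auto
    from inspan_lin[OF a b, of "c K'"] show ?case by simp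
  qed
  from this[of K] show ?thesis by (rule inspan_cong) (use v in auto)
qed

lemma Ddec:
  assumes ev: "\<forall>k<N. eig (w k) (l k)"
    and kinv: "\<forall>\<nu><N. \<forall>\<mu><N. (\<Sum>k<N. ip (w k) (w k) * eta \<nu> * cnj (w k \<nu>) * w k \<mu>) = (if \<nu> = \<mu> then 1 else 0)"
    and mu: "\<mu> < N" and nu: "\<nu> < N"
  shows "Dm \<mu> \<nu> = (\<Sum>k<N. ip (w k) (w k) * eta \<mu> * cnj (w k \<mu>) * of_real (l k) * w k \<nu>)"
proof -
  have "Dm \<mu> \<nu> = (\<Sum>\<rho><N. (if \<mu> = \<rho> then 1 else 0) * Dm \<rho> \<nu>)"
    using mu by (simp add: if_distrib[of "\<lambda>x. x * _"] cong: if_cong)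
  also have "\<dots> = (\<Sum>\<rho><N. (\<Sum>k<N. ip (w k) (w k) * eta \<mu> * cnj (w k \<mu>) * w k \<rho>) * Dm \<rho> \<nu>)"
    using kinv mu by (intro sum.cong refl) simp
  also have "\<dots> = (\<Sum>\<rho><N. \<Sum>k<N. (ip (w k) (w k) * eta \<mu> * cnj (w k \<mu>)) * (w k \<rho> * Dm \<rho> \<nu>))"
    by (simp add: sum_distrib_right mult.assoc)
  also have "\<dots> = (\<Sum>k<N. \<Sum>\<rho><N. (ip (w k) (w k) * eta \<mu> * cnj (w k \<mu>)) * (w k \<rho> * Dm \<rho> \<nu>))"
    by (rule sum.swap)
  also have "\<dots> = (\<Sum>k<N. (ip (w k) (w k) * eta \<mu> * cnj (w k \<mu>)) * (\<Sum>\<rho><N. w k \<rho> * Dm \<rho> \<nu>))"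
    by (simp add: sum_distrib_left)
  also have "\<dots> = (\<Sum>k<N. ip (w k) (w k) * eta \<mu> * cnj (w k \<mu>) * of_real (l k) * w k \<nu>)"
    using ev nu unfolding eig_def by (intro sum.cong refl) (simp add: mult.assoc)
  finally show ?thesis .
qed

end

lemma mat_mult_entry:
  assumes "i < n" "j < n"
  shows "(mat n n f * mat n n g) $$ (i,j) = (\<Sum>k<n. f (i,k) * g (k,j))"
  using assms by (simp add: scalar_prod_def atLeast0LessThan)

lemma bogo_inverse:
  fixes N :: nat and eta :: "nat \<Rightarrow> complex" and X Y :: "nat \<Rightarrow> nat \<Rightarrow> complex"
  assumes eta: "\<forall>\<mu><N. eta \<mu> = 1 \<or> eta \<mu> = -1"
    and G1: "\<forall>k<N. \<forall>l<N. (\<Sum>\<mu><N. eta \<mu> * (X k \<mu> * cnj (X l \<mu>) - Y k \<mu> * cnj (Y l \<mu>))) = (if k = l then 1 else 0)"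
    and G2: "\<forall>k<N. \<forall>l<N. (\<Sum>\<mu><N. eta \<mu> * (X k \<mu> * Y l \<mu> - Y k \<mu> * X l \<mu>)) = 0"
  shows "\<forall>p<N. \<forall>q<N. (\<Sum>k<N. eta p * cnj (X k p) * X k q - eta p * Y k p * cnj (Y k q)) = (if p = q then 1 else 0)"
proof -
  have ec: "cnj (eta \<mu>) = eta \<mu>" if "\<mu> < N" for \<mu> using eta that by auto
  define tt where "tt k p = (if k < N then (if p < N then X k p else Y k (p - N))
        else (if p < N then cnj (Y (k - N) p) else cnj (X (k - N) (p - N))))" for k p
  define K where "K p = (if p < N then eta p else - eta (p - N))" for p
  define J :: "nat \<Rightarrow> complex" where "J k = (if k < N then 1 else -1)" for k
  define T where "T = mat (2*N) (2*N) (\<lambda>(k,p). tt k p)"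
  define B where "B = mat (2*N) (2*N) (\<lambda>(p,l). K p * cnj (tt l p) * J l)"
  have TB: "T * B = 1\<^sub>m (2*N)"
  proof (rule eq_matI)
    fix k l assume "k < dim_row (1\<^sub>m (2*N) :: complex mat)" "l < dim_col (1\<^sub>m (2*N) :: complex mat)"
    hence k: "k < 2*N" and l: "l < 2*N" by auto
    have "(T * B) $$ (k,l) = (\<Sum>p<2*N. tt k p * (K p * cnj (tt l p) * J l))"
      unfolding T_def B_def mat_mult_entry[OF k l] by simp
    also have "\<dots> = (if k = l then 1 else 0)"
    proof -
      have s: "(\<Sum>p<2*N. tt k p * (K p * cnj (tt l p) * J l))
         = (\<Sum>p<N. tt k p * (K p * cnj (tt l p) * J l)) + (\<Sum>p<N. tt k (N+p) * (K (N+p) * cnj (tt l (N+p)) * J l))"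
        by (rule sum_split2)
      consider (a) "k < N" "l < N" | (b) "k < N" "\<not> l < N" | (c) "\<not> k < N" "l < N" | (d) "\<not> k < N" "\<not> l < N" by blast
      thus ?thesis
      proof cases
        case a
        have "(\<Sum>p<2*N. tt k p * (K p * cnj (tt l p) * J l)) = (\<Sum>\<mu><N. eta \<mu> * (X k \<mu> * cnj (X l \<mu>) - Y k \<mu> * cnj (Y l \<mu>)))"
          unfolding s using a by (simp add: tt_def K_def J_def sum_subtractf sum_negf algebra_simps)
        thus ?thesis using G1 a by simp
      next
        case b
        define l' where "l' = l - N"
        have l': "l' < N" "l = N + l'" using b l unfolding l'_def by auto
        have "(\<Sum>p<2*N. tt k p * (K p * cnj (tt l p) * J l)) = - (\<Sum>\<mu><N. eta \<mu> * (X k \<mu> * Y l' \<mu> - Y k \<mu> * X l' \<mu>))"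
          unfolding s using b l' by (simp add: tt_def K_def J_def sum_subtractf sum_negf algebra_simps)
        thus ?thesis using G2 b l' by simp
      next
        case c
        define k' where "k' = k - N"
        have k': "k' < N" "k = N + k'" using c k unfolding k'_def by auto
        have "(\<Sum>p<2*N. tt k p * (K p * cnj (tt l p) * J l)) = cnj (\<Sum>\<mu><N. eta \<mu> * (X l \<mu> * Y k' \<mu> - Y l \<mu> * X k' \<mu>))"
          unfolding s using c k' by (simp add: tt_def K_def J_def sum_subtractf sum_negf ec algebra_simps)
        thus ?thesis using G2 c k' by simp
      next
        case d
        define k' where "k' = k - N"
        have k': "k' < N" "k = N + k'" using d k unfolding k'_def by auto
        define l' where "l' = l - N"
        have l': "l' < N" "l = N + l'" using d l unfolding l'_def by auto
        have "(\<Sum>p<2*N. tt k p * (K p * cnj (tt l p) * J l)) = cnj (\<Sum>\<mu><N. eta \<mu> * (X k' \<mu> * cnj (X l' \<mu>) - Y k' \<mu> * cnj (Y l' \<mu>)))"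
          unfolding s using k' l' by (simp add: tt_def K_def J_def sum_subtractf sum_negf ec algebra_simps)
        thus ?thesis using G1 k' l' by simp
      qed
    qed
    finally show "(T * B) $$ (k,l) = 1\<^sub>m (2*N) $$ (k,l)" using k l by simp
  qed (auto simp: T_def B_def)
  have BT: "B * T = 1\<^sub>m (2*N)"
    by (rule mat_mult_left_right_inverse[OF _ _ TB]) (auto simp: T_def B_def)
  show ?thesis
  proof (intro allI impI)
    fix p q assume p: "p < N" and q: "q < N"
    hence p2: "p < 2*N" and q2: "q < 2*N" by auto
    have "(B * T) $$ (p,q) = (\<Sum>k<2*N. K p * cnj (tt k p) * J k * tt k q)"
      unfolding T_def B_def mat_mult_entry[OF p2 q2] by simp
    also have "\<dots> = (\<Sum>k<N. eta p * cnj (X k p) * X k q - eta p * Y k p * cnj (Y k q))"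
      unfolding sum_split2 using p q by (simp add: tt_def K_def J_def sum_subtractf sum_negf algebra_simps)
    finally show "(\<Sum>k<N. eta p * cnj (X k p) * X k q - eta p * Y k p * cnj (Y k q)) = (if p = q then 1 else 0)"
      using BT p2 q2 by simp
  qed
qed

lemma mat_mult_entry2:
  assumes "A \<in> carrier_mat n k" "B \<in> carrier_mat k m" "i < n" "j < m"
  shows "(A * B) $$ (i,j) = (\<Sum>r<k. A $$ (i,r) * B $$ (r,j))"
  using assms by (simp add: scalar_prod_def atLeast0LessThan)

lemma Mx_herm:
  assumes herm_alpha: "\<forall>i<n. \<forall>j<n. \<alpha> i j = cnj (\<alpha> j i)"
    and herm_eps: "\<forall>i<n. \<forall>j<n. \<epsilon> i j = cnj (\<epsilon> j i)"
    and sym_gamma: "\<forall>i<n. \<forall>j<n. \<gamma> i j = \<gamma> j i"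
    and mu: "\<mu> < 2*n" and nu: "\<nu> < 2*n"
  shows "Mx n \<alpha> \<epsilon> \<gamma> \<mu> \<nu> = cnj (Mx n \<alpha> \<epsilon> \<gamma> \<nu> \<mu>)"
proof (cases "\<mu> < n")
  case True
  show ?thesis
  proof (cases "\<nu> < n")
    case True with \<open>\<mu> < n\<close> show ?thesis using herm_alpha[rule_format, of \<mu> \<nu>] by (simp add: Mx_def)
  next
    case False
    hence "\<nu> - n < n" using nu by simp
    with \<open>\<mu> < n\<close> False show ?thesis using sym_gamma[rule_format, of "\<nu> - n" \<mu>] by (simp add: Mx_def)
  qed
next
  case False
  hence m: "\<mu> - n < n" using mu by simp
  show ?thesis
  proof (cases "\<nu> < n")
    case True with False m show ?thesis using sym_gamma[rule_format, of "\<mu> - n" \<nu>] by (simp add: Mx_def)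
  next
    case F2: False
    hence "\<nu> - n < n" using nu by simp
    with False F2 m show ?thesis using herm_eps[rule_format, of "\<nu> - n" "\<mu> - n"] by (simp add: Mx_def)
  qed
qed

theorem proposition5:
  fixes emb :: "complex \<Rightarrow> 'A::ring_1" and st :: "'A \<Rightarrow> 'A"
    and n :: nat and a b :: "nat \<Rightarrow> 'A"
    and \<alpha> \<epsilon> \<gamma> :: "nat \<Rightarrow> nat \<Rightarrow> complex" and D :: "complex mat"
  assumes alg: "complex_star_algebra emb st"
    and nontriv: "(1::'A) \<noteq> 0"
    and bos: "bosonic_families emb st n a b"
    and herm_alpha: "\<forall>i<n. \<forall>j<n. \<alpha> i j = cnj (\<alpha> j i)"
    and herm_eps: "\<forall>i<n. \<forall>j<n. \<epsilon> i j = cnj (\<epsilon> j i)"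
    and sym_gamma: "\<forall>i<n. \<forall>j<n. \<gamma> i j = \<gamma> j i"
    and dyn: "is_dynamic_matrix emb st n a b (hamiltonian emb st n a b \<alpha> \<epsilon> \<gamma>) D"
  shows "BV_diagonalizable emb st n a b (hamiltonian emb st n a b \<alpha> \<epsilon> \<gamma>)
         \<longleftrightarrow> physically_diagonalizable D"
proof -
  interpret B: bosq emb st n a b
    by unfold_locales (rule alg, rule nontriv, rule bos)
  define M where "M = Mx n \<alpha> \<epsilon> \<gamma>"
  define cr where "cr = - (\<Sum>i<n. Re (\<epsilon> i i))"
  have epsr: "\<epsilon> i i = of_real (Re (\<epsilon> i i))" if "i < n" for i
    using herm_eps[rule_format, OF that that] by (simp add: complex_eq_iff)
  have H: "hamiltonian emb st n a b \<alpha> \<epsilon> \<gamma> = B.Hq M (of_real cr)"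
  proof -
    have "- (\<Sum>i<n. \<epsilon> i i) = of_real cr" unfolding cr_def using epsr by (simp add: sum_negf)
    thus ?thesis unfolding B.ham_form M_def by simp
  qed
  have Mh: "\<forall>\<mu><2*n. \<forall>\<nu><2*n. M \<mu> \<nu> = cnj (M \<nu> \<mu>)"
    unfolding M_def using Mx_herm[OF herm_alpha herm_eps sym_gamma] by blast
  have Dc: "D \<in> carrier_mat (2*n) (2*n)" using dyn unfolding is_dynamic_matrix_def by blast
  have DM: "\<forall>\<mu><2*n. \<forall>\<nu><2*n. D $$ (\<mu>,\<nu>) = etac n \<mu> * M \<mu> \<nu>"
  proof (intro allI impI)
    fix \<mu> \<nu> assume mu: "\<mu> < 2*n" and nu: "\<nu> < 2*n"
    have "comm (psi st n a b \<mu>) (B.Hq M (of_real cr)) = (\<Sum>\<nu><2*n. emb (D $$ (\<mu>,\<nu>)) * psi st n a b \<nu>)"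
      using dyn mu unfolding is_dynamic_matrix_def H by blast
    hence "B.lc (\<lambda>\<nu>. D $$ (\<mu>,\<nu>)) (\<lambda>_. 0) = B.lc (\<lambda>\<nu>. etac n \<mu> * M \<mu> \<nu>) (\<lambda>_. 0)"
      unfolding B.lc_x0 B.comm_psi_Hq[OF mu] by simp
    from B.lc_eq(1)[OF this nu] show "D $$ (\<mu>,\<nu>) = etac n \<mu> * M \<mu> \<nu>" .
  qed
  have eta2: "etac n \<mu> * etac n \<mu> = 1" for \<mu> by (simp add: etac_def)
  interpret K: kre "2*n" "etac n" "\<lambda>\<mu> \<nu>. D $$ (\<mu>,\<nu>)"
  proof
    show "etac n \<mu> = 1 \<or> etac n \<mu> = -1" for \<mu> by (simp add: etac_def)
    fix \<mu> \<nu> assume "\<mu> < 2*n" "\<nu> < 2*n"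
    thus "D $$ (\<mu>,\<nu>) * etac n \<nu> = cnj (D $$ (\<nu>,\<mu>) * etac n \<mu>)"
      using DM[rule_format, of \<mu> \<nu>] DM[rule_format, of \<nu> \<mu>] Mh[rule_format, of \<nu> \<mu>] by (simp add: mult_ac)
  qed
  have s2: "K.ip x x * K.ip x x = 1" if "K.ip x x = 1 \<or> K.ip x x = -1" for x using that by auto
  have dirR: "physically_diagonalizable D" if BV: "BV_diagonalizable emb st n a b (B.Hq M (of_real cr))"
  proof -
    obtain X Y :: "nat \<Rightarrow> nat \<Rightarrow> complex" and lam :: "nat \<Rightarrow> real" where
      eX: "\<forall>k<2*n. \<forall>\<nu><2*n. (\<Sum>\<mu><2*n. X k \<mu> * D $$ (\<mu>,\<nu>)) = of_real (lam k) * X k \<nu>" and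
      eY: "\<forall>k<2*n. \<forall>\<nu><2*n. (\<Sum>\<mu><2*n. cnj (Y k \<mu>) * D $$ (\<mu>,\<nu>)) = of_real (- lam k) * cnj (Y k \<nu>)" and
      G1: "\<forall>k<2*n. \<forall>l<2*n. (\<Sum>\<mu><2*n. etac n \<mu> * (X k \<mu> * cnj (X l \<mu>) - Y k \<mu> * cnj (Y l \<mu>))) = (if k = l then 1 else 0)" and
      G2: "\<forall>k<2*n. \<forall>l<2*n. (\<Sum>\<mu><2*n. etac n \<mu> * (X k \<mu> * Y l \<mu> - Y k \<mu> * X l \<mu>)) = 0"
      using B.BV_data[of "\<lambda>\<mu> \<nu>. D $$ (\<mu>,\<nu>)" M, OF DM Mh BV] by blast
    have kinv: "\<forall>p<2*n. \<forall>q<2*n. (\<Sum>k<2*n. etac n p * cnj (X k p) * X k q - etac n p * Y k p * cnj (Y k q)) = (if p = q then 1 else 0)"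
      by (rule bogo_inverse[OF _ G1 G2]) (simp add: etac_def)
    define f where "f k = (if k < 2*n then X k else (\<lambda>\<mu>. cnj (Y (k - 2*n) \<mu>)))" for k
    define S where "S = f ` {..<2*(2*n)}"
    have fS: "finite S" unfolding S_def by simp
    have eS: "\<forall>x\<in>S. \<exists>l. K.eig x l"
    proof
      fix x assume "x \<in> S"
      then obtain k where k: "k < 2*(2*n)" "x = f k" unfolding S_def by auto
      show "\<exists>l. K.eig x l"
      proof (cases "k < 2*n")
        case True
        hence "K.eig x (lam k)" unfolding K.eig_def k f_def using eX by simp
        thus ?thesis by blast
      next
        case False
        hence "k - 2*n < 2*n" using k by simp
        hence "K.eig x (- lam (k - 2*n))" unfolding K.eig_def k f_def using eY False by simp
        thus ?thesis by blast
      qed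
    qed
    have sS: "\<forall>v. K.inspan S v"
    proof
      fix v :: "nat \<Rightarrow> complex"
      define c where "c k = (if k < 2*n then (\<Sum>p<2*n. v p * etac n p * cnj (X k p))
          else - (\<Sum>p<2*n. v p * etac n p * Y (k - 2*n) p))" for k
      have "\<forall>q<2*n. v q = (\<Sum>k<2*(2*n). c k * f k q)"
      proof (intro allI impI)
        fix q assume q: "q < 2*n"
        define A where "A k p = etac n p * cnj (X k p) * X k q" for k p
        define B where "B k p = etac n p * Y k p * cnj (Y k q)" for k p
        have "(\<Sum>k<2*(2*n). c k * f k q) = (\<Sum>k<2*n. c k * f k q) + (\<Sum>k<2*n. c (2*n+k) * f (2*n+k) q)"
          by (rule sum_split2)
        also have "(\<Sum>k<2*n. c k * f k q) = (\<Sum>k<2*n. \<Sum>p<2*n. v p * A k p)"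
          by (intro sum.cong refl) (simp add: c_def f_def A_def sum_distrib_right sum_distrib_left mult_ac)
        also have "(\<Sum>k<2*n. c (2*n+k) * f (2*n+k) q) = (\<Sum>k<2*n. \<Sum>p<2*n. - (v p * B k p))"
          by (intro sum.cong refl) (simp add: c_def f_def B_def sum_distrib_right sum_distrib_left sum_negf mult_ac)
        also have "(\<Sum>k<2*n. \<Sum>p<2*n. v p * A k p) + (\<Sum>k<2*n. \<Sum>p<2*n. - (v p * B k p))
            = (\<Sum>k<2*n. \<Sum>p<2*n. v p * A k p + - (v p * B k p))"
          by (simp only: sum.distrib)
        also have "\<dots> = (\<Sum>p<2*n. \<Sum>k<2*n. v p * A k p + - (v p * B k p))" by (rule sum.swap)
        also have "\<dots> = (\<Sum>p<2*n. v p * (\<Sum>k<2*n. A k p - B k p))"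
          by (intro sum.cong refl) (simp add: sum_distrib_left right_diff_distrib sum_subtractf)
        also have "\<dots> = (\<Sum>p<2*n. v p * (if p = q then 1 else 0))"
          using kinv q by (intro sum.cong refl) (simp add: A_def B_def)
        also have "\<dots> = v q" using q by (simp add: if_distrib[of "\<lambda>x. _ * x"] cong: if_cong)
        finally show "v q = (\<Sum>k<2*(2*n). c k * f k q)" by simp
      qed
      thus "K.inspan S v" unfolding S_def by (rule K.inspan_family)
    qed
    obtain w l where ev: "\<forall>k<2*n. K.eig (w k) (l k)" and sg: "\<forall>k<2*n. K.ip (w k) (w k) = 1 \<or> K.ip (w k) (w k) = -1"
      and orth: "\<forall>k<2*n. \<forall>k'<2*n. k \<noteq> k' \<longrightarrow> K.ip (w k) (w k') = 0"
      and winv: "\<forall>\<nu><2*n. \<forall>\<mu><2*n. (\<Sum>k<2*n. K.ip (w k) (w k) * etac n \<nu> * cnj (w k \<nu>) * w k \<mu>) = (if \<nu> = \<mu> then 1 else 0)"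
      using K.core[OF fS eS sS] by blast
    define s where "s k = K.ip (w k) (w k)" for k
    define Pm where "Pm = mat (2*n) (2*n) (\<lambda>(\<mu>,k). s k * etac n \<mu> * cnj (w k \<mu>))"
    define Lm :: "complex mat" where "Lm = mat (2*n) (2*n) (\<lambda>(i,j). if i = j then complex_of_real (l i) else 0)"
    define Qm where "Qm = mat (2*n) (2*n) (\<lambda>(k,\<mu>). w k \<mu>)"
    have PQ: "Pm * Qm = 1\<^sub>m (2*n)"
    proof (rule eq_matI)
      fix i j assume "i < dim_row (1\<^sub>m (2*n) :: complex mat)" "j < dim_col (1\<^sub>m (2*n) :: complex mat)"
      hence i: "i < 2*n" and j: "j < 2*n" by auto
      show "(Pm * Qm) $$ (i,j) = 1\<^sub>m (2*n) $$ (i,j)"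
        unfolding Pm_def Qm_def mat_mult_entry[OF i j] using winv i j by (simp add: s_def)
    qed (auto simp: Pm_def Qm_def)
    have QP: "Qm * Pm = 1\<^sub>m (2*n)"
    proof (rule eq_matI)
      fix i j assume "i < dim_row (1\<^sub>m (2*n) :: complex mat)" "j < dim_col (1\<^sub>m (2*n) :: complex mat)"
      hence i: "i < 2*n" and j: "j < 2*n" by auto
      have "(Qm * Pm) $$ (i,j) = (\<Sum>\<mu><2*n. w i \<mu> * (s j * etac n \<mu> * cnj (w j \<mu>)))"
        unfolding Pm_def Qm_def mat_mult_entry[OF i j] by simp
      also have "\<dots> = s j * K.ip (w i) (w j)" unfolding K.ip_def by (simp add: sum_distrib_left mult_ac)
      also have "\<dots> = (if i = j then 1 else 0)"
      proof (cases "i = j")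
        case True thus ?thesis using s2 sg j unfolding s_def by auto
      next
        case False thus ?thesis using orth i j by auto
      qed
      finally show "(Qm * Pm) $$ (i,j) = 1\<^sub>m (2*n) $$ (i,j)" using i j by simp
    qed (auto simp: Pm_def Qm_def)
    have PL: "Pm * Lm = mat (2*n) (2*n) (\<lambda>(\<mu>,k). s k * etac n \<mu> * cnj (w k \<mu>) * complex_of_real (l k))"
    proof (rule eq_matI)
      fix i j assume "i < dim_row (mat (2*n) (2*n) (\<lambda>(\<mu>,k). s k * etac n \<mu> * cnj (w k \<mu>) * complex_of_real (l k)))"
        "j < dim_col (mat (2*n) (2*n) (\<lambda>(\<mu>,k). s k * etac n \<mu> * cnj (w k \<mu>) * complex_of_real (l k)))"
      hence i: "i < 2*n" and j: "j < 2*n" by auto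
      have "(Pm * Lm) $$ (i,j) = (\<Sum>r<2*n. s r * etac n i * cnj (w r i) * (if r = j then complex_of_real (l r) else 0))"
        unfolding Pm_def Lm_def mat_mult_entry[OF i j] by simp
      also have "\<dots> = (\<Sum>r<2*n. if r = j then s j * etac n i * cnj (w j i) * complex_of_real (l j) else 0)"
        by (intro sum.cong refl) auto
      also have "\<dots> = s j * etac n i * cnj (w j i) * complex_of_real (l j)" using j by simp
      finally show "(Pm * Lm) $$ (i,j) = mat (2*n) (2*n) (\<lambda>(\<mu>,k). s k * etac n \<mu> * cnj (w k \<mu>) * complex_of_real (l k)) $$ (i,j)"
        using i j by simp
    qed (auto simp: Pm_def Lm_def)
    have DPLQ: "D = Pm * Lm * Qm"
    proof (rule eq_matI)
      fix i j assume "i < dim_row (Pm * Lm * Qm)" "j < dim_col (Pm * Lm * Qm)"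
      hence i: "i < 2*n" and j: "j < 2*n" by (auto simp: Pm_def Qm_def)
      have "(Pm * Lm * Qm) $$ (i,j) = (\<Sum>k<2*n. s k * etac n i * cnj (w k i) * complex_of_real (l k) * w k j)"
        unfolding PL Qm_def mat_mult_entry[OF i j] by simp
      also have "\<dots> = D $$ (i,j)" using K.Ddec[OF ev winv i j] unfolding s_def by simp
      finally show "D $$ (i,j) = (Pm * Lm * Qm) $$ (i,j)" by simp
    qed (use Dc in \<open>auto simp: Pm_def Qm_def\<close>)
    have car: "{D, Lm, Pm, Qm} \<subseteq> carrier_mat (2*n) (2*n)" using Dc by (auto simp: Pm_def Qm_def Lm_def)
    have "similar_mat_wit D Lm Pm Qm" unfolding similar_mat_wit_def Let_def using car PQ QP DPLQ Dc by auto
    moreover have "diagonal_mat Lm" unfolding diagonal_mat_def Lm_def by auto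
    moreover have "\<forall>i<2*n. Lm $$ (i,i) \<in> \<real>" unfolding Lm_def by auto
    ultimately show ?thesis unfolding physically_diagonalizable_def using Dc by blast
  qed
  have dirL: "BV_diagonalizable emb st n a b (B.Hq M (of_real cr))" if PD: "physically_diagonalizable D"
  proof -
    from PD obtain m Lm Pm Qm where Dm: "D \<in> carrier_mat m m" and sim: "similar_mat_wit D Lm Pm Qm"
      and diag: "diagonal_mat Lm" and re: "\<forall>i<m. Lm $$ (i,i) \<in> \<real>"
      unfolding physically_diagonalizable_def by blast
    have m: "m = 2*n" using Dm Dc by auto
    have car: "Lm \<in> carrier_mat (2*n) (2*n)" "Pm \<in> carrier_mat (2*n) (2*n)" "Qm \<in> carrier_mat (2*n) (2*n)"
      and PQ: "Pm * Qm = 1\<^sub>m (2*n)" and QP: "Qm * Pm = 1\<^sub>m (2*n)" and DPLQ: "D = Pm * Lm * Qm"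
      using sim Dc unfolding similar_mat_wit_def Let_def by auto
    have QD: "Qm * D = Lm * Qm"
    proof -
      have a1: "Qm * (Pm * Lm * Qm) = Qm * (Pm * Lm) * Qm"
        using assoc_mult_mat[of Qm "2*n" "2*n" "Pm * Lm" "2*n" Qm "2*n"] car by auto
      have a2: "Qm * (Pm * Lm) = Qm * Pm * Lm"
        using assoc_mult_mat[of Qm "2*n" "2*n" Pm "2*n" Lm "2*n"] car by auto
      show ?thesis unfolding DPLQ a1 a2 QP using car by simp
    qed
    have rowev: "K.eig (\<lambda>\<mu>. Qm $$ (k,\<mu>)) (Re (Lm $$ (k,k)))" if k: "k < 2*n" for k
      unfolding K.eig_def
    proof (intro allI impI)
      fix \<nu> assume nu: "\<nu> < 2*n"
      have "(\<Sum>\<mu><2*n. Qm $$ (k,\<mu>) * D $$ (\<mu>,\<nu>)) = (Qm * D) $$ (k,\<nu>)"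
        using mat_mult_entry2[OF car(3) Dc k nu] by simp
      also have "\<dots> = (Lm * Qm) $$ (k,\<nu>)" unfolding QD ..
      also have "\<dots> = (\<Sum>r<2*n. Lm $$ (k,r) * Qm $$ (r,\<nu>))" using mat_mult_entry2[OF car(1) car(3) k nu] .
      also have "\<dots> = (\<Sum>r<2*n. if r = k then Lm $$ (k,k) * Qm $$ (k,\<nu>) else 0)"
        using diag car k unfolding diagonal_mat_def by (intro sum.cong refl) auto
      also have "\<dots> = Lm $$ (k,k) * Qm $$ (k,\<nu>)" using k by simp
      also have "Lm $$ (k,k) = complex_of_real (Re (Lm $$ (k,k)))" using re k m
        by (simp add: complex_is_Real_iff)
      finally show "(\<Sum>\<mu><2*n. Qm $$ (k,\<mu>) * D $$ (\<mu>,\<nu>)) = complex_of_real (Re (Lm $$ (k,k))) * Qm $$ (k,\<nu>)" .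
    qed
    define f where "f k = (\<lambda>\<mu>. Qm $$ (k,\<mu>))" for k
    define S where "S = f ` {..<2*n}"
    have fS: "finite S" unfolding S_def by simp
    have eS: "\<forall>x\<in>S. \<exists>l. K.eig x l" unfolding S_def f_def using rowev by blast
    have sS: "\<forall>v. K.inspan S v"
    proof
      fix v :: "nat \<Rightarrow> complex"
      have "\<forall>\<nu><2*n. v \<nu> = (\<Sum>k<2*n. (\<Sum>\<mu><2*n. v \<mu> * Pm $$ (\<mu>,k)) * f k \<nu>)"
      proof (intro allI impI)
        fix \<nu> assume nu: "\<nu> < 2*n"
        have "(\<Sum>k<2*n. (\<Sum>\<mu><2*n. v \<mu> * Pm $$ (\<mu>,k)) * f k \<nu>) = (\<Sum>k<2*n. \<Sum>\<mu><2*n. v \<mu> * (Pm $$ (\<mu>,k) * Qm $$ (k,\<nu>)))"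
          unfolding f_def by (simp add: sum_distrib_right mult.assoc)
        also have "\<dots> = (\<Sum>\<mu><2*n. \<Sum>k<2*n. v \<mu> * (Pm $$ (\<mu>,k) * Qm $$ (k,\<nu>)))" by (rule sum.swap)
        also have "\<dots> = (\<Sum>\<mu><2*n. v \<mu> * (Pm * Qm) $$ (\<mu>,\<nu>))"
          by (intro sum.cong refl) (simp add: mat_mult_entry2[OF car(2) car(3) _ nu] sum_distrib_left)
        also have "\<dots> = (\<Sum>\<mu><2*n. v \<mu> * (if \<mu> = \<nu> then 1 else 0))"
          unfolding PQ using nu by (intro sum.cong refl) simp
        also have "\<dots> = v \<nu>" using nu by (simp add: if_distrib[of "\<lambda>x. _ * x"] cong: if_cong)
        finally show "v \<nu> = (\<Sum>k<2*n. (\<Sum>\<mu><2*n. v \<mu> * Pm $$ (\<mu>,k)) * f k \<nu>)" by simp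
      qed
      thus "K.inspan S v" unfolding S_def by (rule K.inspan_family)
    qed
    obtain w l where ev: "\<forall>k<2*n. K.eig (w k) (l k)" and sg: "\<forall>k<2*n. K.ip (w k) (w k) = 1 \<or> K.ip (w k) (w k) = -1"
      and orth: "\<forall>k<2*n. \<forall>k'<2*n. k \<noteq> k' \<longrightarrow> K.ip (w k) (w k') = 0"
      and winv: "\<forall>\<nu><2*n. \<forall>\<mu><2*n. (\<Sum>k<2*n. K.ip (w k) (w k) * etac n \<nu> * cnj (w k \<nu>) * w k \<mu>) = (if \<nu> = \<mu> then 1 else 0)"
      using K.core[OF fS eS sS] by blast
    have Mdec: "\<forall>\<mu><2*n. \<forall>\<nu><2*n. M \<mu> \<nu> = (\<Sum>k<2*n. K.ip (w k) (w k) * complex_of_real (l k) * (cnj (w k \<mu>) * w k \<nu>))"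
    proof (intro allI impI)
      fix \<mu> \<nu> assume mu: "\<mu> < 2*n" and nu: "\<nu> < 2*n"
      have "M \<mu> \<nu> = etac n \<mu> * D $$ (\<mu>,\<nu>)" using DM mu nu eta2[of \<mu>] by (simp add: mult.assoc[symmetric])
      also have "\<dots> = etac n \<mu> * (\<Sum>k<2*n. K.ip (w k) (w k) * etac n \<mu> * cnj (w k \<mu>) * complex_of_real (l k) * w k \<nu>)"
        using K.Ddec[OF ev winv mu nu] by simp
      also have "\<dots> = (\<Sum>k<2*n. (etac n \<mu> * etac n \<mu>) * (K.ip (w k) (w k) * complex_of_real (l k) * (cnj (w k \<mu>) * w k \<nu>)))"
        by (simp add: sum_distrib_left mult_ac)
      also have "\<dots> = (\<Sum>k<2*n. K.ip (w k) (w k) * complex_of_real (l k) * (cnj (w k \<mu>) * w k \<nu>))"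
        by (simp add: eta2)
      finally show "M \<mu> \<nu> = (\<Sum>k<2*n. K.ip (w k) (w k) * complex_of_real (l k) * (cnj (w k \<mu>) * w k \<nu>))" .
    qed
    show ?thesis
      by (rule B.BV_from_basis[where w = w and l = l and M = M and cr = cr]) (use sg orth Mdec in \<open>simp_all add: K.ip_def\<close>)
  qed
  show ?thesis unfolding H using dirL dirR by blast
qed

end
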